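(* Let $d\in\mathbb N$, $\mathcal D=\{1,\dots,d\}$, $d_s\in\mathcal D$, $w:\mathbb Z^d\to[1,\infty)$ a weight function and $f\in\mathcal A^w(\mathbb T^d)$. Suppose there exists a subset of ANOVA terms $U\subseteq U_{d_s}$ and $\varepsilon_1>0$ such that $$\frac{\sum_{\mathbf k\in\mathbb F^{(d)}_{\mathbf u}}|c_{\mathbf k}(f)|}{\sum_{\mathbf k\in\mathbb Z^d}|c_{\mathbf k}(f)|}<\varepsilon_1\quad\text{for every }\mathbf u\in U_{d_s}\setminus U,$$ and $\varepsilon_2>0$ with $\|f-\mathrm T_{d_s}f\|_{\mathrm L_\infty(\mathbb T^d)}/\|f\|_{\mathcal A^w(\mathbb T^d)}<\varepsilon_2$. Then $$\frac{\|f-\mathrm T_Uf\|_{\mathrm L_\infty(\mathbb T^d)}}{\|f\|_{\mathcal A^w(\mathbb T^d)}}\le\varepsilon_2+\sqrt{|U_{d_s}\setminus U|\,\varepsilon_1}.$$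
   Context: $\mathbb T=[0,1)$ with periodic identification; $c_{\mathbf k}(g)$ Fourier coefficients. $\mathcal A^w(\mathbb T^d)=\{g\in\mathrm L_1:\|g\|_{\mathcal A^w}=\sum_{\mathbf k}w(\mathbf k)|c_{\mathbf k}(g)|<\infty\}$. For $\mathbf u\subseteq\mathcal D$: $\mathrm P_{\mathbf u}f(\mathbf x_{\mathbf u})=\int_{\mathbb T^{|\mathcal D\setminus\mathbf u|}}f(\mathbf x)\,d\mathbf x_{\mathcal D\setminus\mathbf u}$, ANOVA terms $f_{\mathbf u}=\mathrm P_{\mathbf u}f-\sum_{\mathbf v\subsetneq\mathbf u}f_{\mathbf v}$ (recursively), $\mathbb F^{(d)}_{\mathbf u}=\{\mathbf k\in\mathbb Z^d:k_j=0\ \forall j\notin\mathbf u,\ k_j\neq0\ \forall j\in\mathbf u\}$. $U_{d_s}=\{\mathbf u\subseteq\mathcal D:|\mathbf u|\le d_s\}$. A subset of ANOVA terms is a $U\subseteq\mathcal P(\mathcal D)$ closed under taking subsets; $\mathrm T_Uf=\sum_{\mathbf u\in U}f_{\mathbf u}$, $\mathrm T_{d_s}=\mathrm T_{U_{d_s}}$. *)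

theory Defs
  imports "HOL-Analysis.Analysis" "HOL-Probability.Essential_Supremum"
begin

text \<open>The torus T^d is represented by the half-open unit cube [0,1)^d in real^'n,
  where the finite type 'n plays the role of the index set D = {1,...,d}, d = CARD('n).\<close>

definition torus :: "(real^'n) set" where
  "torus = {x. \<forall>i. 0 \<le> x$i \<and> x$i < 1}"

definition torus_measure :: "(real^'n) measure" where
  "torus_measure = lebesgue_on torus"

definition fourier_coeff :: "int^'n \<Rightarrow> (real^'n \<Rightarrow> complex) \<Rightarrow> complex" where
  "fourier_coeff k g = (LINT x|torus_measure.
      g x * cis (- 2 * pi * (\<Sum>i\<in>UNIV. real_of_int (k$i) * x$i)))"

definition A_norm :: "(int^'n \<Rightarrow> real) \<Rightarrow> (real^'n \<Rightarrow> complex) \<Rightarrow> real" where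
  "A_norm w g = (\<Sum>\<^sub>\<infinity>k. w k * cmod (fourier_coeff k g))"

definition in_A :: "(int^'n \<Rightarrow> real) \<Rightarrow> (real^'n \<Rightarrow> complex) \<Rightarrow> bool" where
  "in_A w g \<longleftrightarrow> integrable torus_measure g \<and>
     (\<lambda>k. w k * cmod (fourier_coeff k g)) summable_on UNIV"

definition Linf_norm :: "(real^'n \<Rightarrow> complex) \<Rightarrow> real" where
  "Linf_norm g = real_of_ereal (esssup torus_measure (\<lambda>x. ereal (cmod (g x))))"

text \<open>The result is represented as a
  function on the full cube that depends only on the coordinates in u; the
  coordinates of y in u are dummies (the cube has measure 1).\<close>
definition P_op :: "'n set \<Rightarrow> (real^'n \<Rightarrow> complex) \<Rightarrow> real^'n \<Rightarrow> complex" where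
  "P_op u g x = (LINT y|torus_measure. g (\<chi> i. if i \<in> u then x$i else y$i))"

function anova :: "(real^'n::finite \<Rightarrow> complex) \<Rightarrow> 'n set \<Rightarrow> real^'n \<Rightarrow> complex" where
  "anova g u = (\<lambda>x. P_op u g x - (\<Sum>v\<in>{v. v \<subset> u}. anova g v x))"
  by auto
termination
  by (relation "Wellfounded.measure (\<lambda>(g, u). card u)") (auto intro: psubset_card_mono)

definition anova_trunc :: "'n set set \<Rightarrow> (real^'n::finite \<Rightarrow> complex) \<Rightarrow> real^'n \<Rightarrow> complex" where
  "anova_trunc U g = (\<lambda>x. \<Sum>u\<in>U. anova g u x)"

definition U_ds :: "nat \<Rightarrow> 'n::finite set set" where
  "U_ds ds = {u. card u \<le> ds}"

definition anova_subset :: "'n set set \<Rightarrow> bool" where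
  "anova_subset U \<longleftrightarrow> (\<forall>u\<in>U. \<forall>v. v \<subseteq> u \<longrightarrow> v \<in> U)"

definition freq_F :: "'n set \<Rightarrow> (int^'n) set" where
  "freq_F u = {k. (\<forall>j. j \<notin> u \<longrightarrow> k$j = 0) \<and> (\<forall>j\<in>u. k$j \<noteq> 0)}"

end

theory Submission
  imports Defs
begin


definition ef :: "int^'n::finite \<Rightarrow> real^'n \<Rightarrow> complex" where
  "ef k x = cis (2 * pi * (\<Sum>i\<in>UNIV. real_of_int (k$i) * x$i))"

lemma fourier_coeff_ef: "fourier_coeff k g = (LINT x|torus_measure. g x * ef (-k) x)"
  unfolding fourier_coeff_def ef_def by (simp add: sum_negf)

lemma ef_add: "ef (k + m) x = ef k x * ef m x"
  unfolding ef_def by (simp add: cis_mult sum.distrib distrib_left distrib_right)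

lemma ef_0[simp]: "ef 0 x = 1"
  unfolding ef_def by simp

lemma norm_ef[simp]: "norm (ef k x) = 1"
  unfolding ef_def by simp

lemma continuous_on_ef: "continuous_on UNIV (ef k)"
  unfolding ef_def by (intro continuous_intros)

lemma torus_borel: "torus \<in> sets borel"
  unfolding torus_def by measurable

lemma Basis_vec_axis: "b \<in> (Basis :: (real^'n::finite) set) \<Longrightarrow> \<exists>i. b = axis i 1"
  by (auto simp: Basis_vec_def)

lemma emeasure_torus: "emeasure lborel (torus :: (real^'n::finite) set) = 1"
proof -
  have "box 0 1 \<subseteq> (torus :: (real^'n::finite) set)" "torus \<subseteq> (cbox 0 1 :: (real^'n::finite) set)"
    by (auto simp: torus_def mem_box Basis_vec_def cart_eq_inner_axis[symmetric] less_imp_le)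
  moreover have p1: "(\<Prod>b\<in>(Basis::(real^'n) set). (1::real^'n) \<bullet> b) = 1"
    by (rule prod.neutral) (auto simp: Basis_vec_def inner_axis inner_axis')
  moreover have "emeasure lborel (box 0 (1::real^'n)) = 1" "emeasure lborel (cbox 0 (1::real^'n)) = 1"
    using p1 by (auto simp: emeasure_lborel_box_eq emeasure_lborel_cbox_eq Basis_vec_def inner_axis inner_axis')
  ultimately show ?thesis
    by (metis antisym emeasure_mono sets_lborel torus_borel box_borel cbox_borel)
qed



lemma infinite_UNIV_ivec: "infinite (UNIV :: (int^'n::finite) set)"
proof
  assume fin: "finite (UNIV :: (int^'n::finite) set)"
  have inj: "inj (\<lambda>z::int. (\<chi> i. z) :: int^'n)"
    by (rule injI) (metis vec_lambda_beta)
  have "finite (range (\<lambda>z::int. (\<chi> i. z) :: int^'n))"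
    using fin by (rule finite_subset[rotated]) simp
  then have "finite (UNIV :: int set)" using inj finite_imageD by blast
  then show False by simp
qed

definition kenum :: "nat \<Rightarrow> int^'n::finite" where
  "kenum = from_nat_into UNIV"

lemma bij_kenum: "bij_betw kenum UNIV (UNIV :: (int^'n::finite) set)"
  unfolding kenum_def by (rule bij_betw_from_nat_into) (auto simp: infinite_UNIV_ivec)

lemma infsum_as_suminf:
  fixes g :: "int^'n::finite \<Rightarrow> 'a::banach"
  assumes "(\<lambda>k. norm (g k)) summable_on UNIV"
  shows "summable (\<lambda>n. norm (g (kenum n)))" and "infsum g UNIV = (\<Sum>n. g (kenum n))"
proof -
  have s1: "(\<lambda>n. norm (g (kenum n))) summable_on UNIV"
    using summable_on_reindex_bij_betw[OF bij_kenum, of "\<lambda>k. norm (g k)"] assms by simp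
  then show "summable (\<lambda>n. norm (g (kenum n)))"
    using has_sum_imp_sums has_sum_infsum sums_summable by blast
  have s2: "(\<lambda>n. g (kenum n)) summable_on UNIV"
    by (rule Infinite_Sum.abs_summable_summable[OF s1])
  have "infsum g UNIV = infsum (\<lambda>n. g (kenum n)) UNIV"
    using infsum_reindex_bij_betw[OF bij_kenum, of g] by simp
  also have "\<dots> = (\<Sum>n. g (kenum n))"
    using has_sum_imp_sums[OF has_sum_infsum[OF s2]] by (simp add: sums_iff)
  finally show "infsum g UNIV = (\<Sum>n. g (kenum n))" .
qed

lemma integral_infsum:
  fixes M :: "'a measure" and c :: "int^'n::finite \<Rightarrow> complex" and \<phi> :: "int^'n \<Rightarrow> 'a \<Rightarrow> complex"
  assumes fin: "finite_measure M" and c: "(\<lambda>k. norm (c k)) summable_on UNIV"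
    and meas: "\<And>k. \<phi> k \<in> borel_measurable M" and bd: "\<And>k x. x \<in> space M \<Longrightarrow> norm (\<phi> k x) \<le> 1"
  shows "integrable M (\<lambda>x. \<Sum>\<^sub>\<infinity>k. c k * \<phi> k x)"
    and "(LINT x|M. (\<Sum>\<^sub>\<infinity>k. c k * \<phi> k x)) = (\<Sum>\<^sub>\<infinity>k. c k * (LINT x|M. \<phi> k x))"
proof -
  interpret finite_measure M by (rule fin)
  define f where "f n x = c (kenum n) * \<phi> (kenum n) x" for n x
  have cs: "summable (\<lambda>n. norm (c (kenum n)))"
    using infsum_as_suminf(1)[OF c] .
  have nf: "norm (f n x) \<le> norm (c (kenum n))" if "x \<in> space M" for n x
    using bd[OF that, of "kenum n"] by (auto simp: f_def norm_mult intro: mult_left_le)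
  have ptw: "(\<Sum>\<^sub>\<infinity>k. c k * \<phi> k x) = (\<Sum>n. f n x)" if x: "x \<in> space M" for x
  proof -
    have "(\<lambda>k. norm (c k * \<phi> k x)) summable_on UNIV"
      by (rule Infinite_Sum.abs_summable_on_comparison_test[OF c])
         (use bd[OF x] in \<open>auto simp: norm_mult intro: mult_left_le\<close>)
    from infsum_as_suminf(2)[OF this] show ?thesis by (simp add: f_def)
  qed
  have mf: "f n \<in> borel_measurable M" for n
    using meas[of "kenum n"] unfolding f_def by measurable
  have int_f: "integrable M (f n)" for n
    by (rule integrable_const_bound[where B="norm (c (kenum n))"]) (use nf mf in \<open>auto intro!: AE_I2\<close>)
  have sum_ptw: "summable (\<lambda>n. norm (f n x))" if "x \<in> space M" for x
    by (rule summable_comparison_test'[OF cs]) (use nf[OF that] in auto)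
  have intb: "(LINT x|M. norm (f n x)) \<le> norm (c (kenum n)) * measure M (space M)" for n
  proof -
    have "(LINT x|M. norm (f n x)) \<le> (LINT x|M. norm (c (kenum n)))"
      by (intro integral_mono int_f integrable_norm) (auto simp: nf)
    then show ?thesis by (simp add: mult.commute)
  qed
  have sum_int: "summable (\<lambda>n. (LINT x|M. norm (f n x)))"
    by (rule summable_comparison_test'[where g="\<lambda>n. norm (c (kenum n)) * measure M (space M)"])
       (use intb summable_mult2[OF cs] in auto)
  have AEs: "AE x in M. summable (\<lambda>n. norm (f n x))" using sum_ptw by auto
  have I1: "integrable M (\<lambda>x. \<Sum>n. f n x)"
    by (rule integrable_suminf[OF int_f AEs sum_int])
  show "integrable M (\<lambda>x. \<Sum>\<^sub>\<infinity>k. c k * \<phi> k x)"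
  proof -
    have "integrable M (\<lambda>x. \<Sum>\<^sub>\<infinity>k. c k * \<phi> k x) \<longleftrightarrow> integrable M (\<lambda>x. \<Sum>n. f n x)"
      by (rule Bochner_Integration.integrable_cong) (auto simp: ptw)
    then show ?thesis using I1 by simp
  qed
  have "(LINT x|M. (\<Sum>\<^sub>\<infinity>k. c k * \<phi> k x)) = (LINT x|M. (\<Sum>n. f n x))"
    by (rule Bochner_Integration.integral_cong) (auto simp: ptw)
  also have "\<dots> = (\<Sum>n. LINT x|M. f n x)"
    by (rule integral_suminf[OF int_f AEs sum_int])
  also have "\<dots> = (\<Sum>n. c (kenum n) * (LINT x|M. \<phi> (kenum n) x))"
    by (simp add: f_def)
  also have "\<dots> = (\<Sum>\<^sub>\<infinity>k. c k * (LINT x|M. \<phi> k x))"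
  proof -
    have b: "norm (LINT x|M. \<phi> k x) \<le> measure M (space M)" for k
    proof -
      have "norm (LINT x|M. \<phi> k x) \<le> (LINT x|M. norm (\<phi> k x))" by (rule integral_norm_bound)
      also have "\<dots> \<le> (LINT x|M. 1)"
        by (intro integral_mono integrable_norm integrable_const_bound[where B=1]) (auto simp: bd meas)
      finally show ?thesis by simp
    qed
    have "(\<lambda>k. norm (c k * (LINT x|M. \<phi> k x))) summable_on UNIV"
      by (rule Infinite_Sum.abs_summable_on_comparison_test'[where g="\<lambda>k. norm (c k) * measure M (space M)"])
         (use summable_on_cmult_left[OF c] b in \<open>auto simp: norm_mult intro: mult_left_mono\<close>)
    from infsum_as_suminf(2)[OF this] show ?thesis by simp
  qed
  finally show "(LINT x|M. (\<Sum>\<^sub>\<infinity>k. c k * \<phi> k x)) = (\<Sum>\<^sub>\<infinity>k. c k * (LINT x|M. \<phi> k x))" .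
qed



lemma torus_lebesgue: "torus \<in> sets lebesgue"
  using torus_borel by (metis sets_lborel sets_completionI_sets)

lemma space_tm[simp]: "space torus_measure = torus"
  by (simp add: torus_measure_def)

lemma sets_tm: "sets torus_measure = sets (restrict_space lebesgue torus)"
  by (simp add: torus_measure_def)

lemma emeasure_tm: "emeasure (torus_measure :: (real^'n::finite) measure) torus = 1"
proof -
  have "emeasure (torus_measure :: (real^'n) measure) torus = emeasure lebesgue (torus :: (real^'n) set)"
    unfolding torus_measure_def using torus_lebesgue by (intro emeasure_restrict_space) simp_all
  also have "\<dots> = emeasure lborel (torus :: (real^'n) set)"
    by (subst emeasure_completion, rule torus_lebesgue, subst main_part) (use torus_borel in simp_all)
  finally show ?thesis using emeasure_torus by simp
qed

lemma finite_tm: "finite_measure torus_measure"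
  by (rule finite_measureI) (simp add: emeasure_tm)

lemma meas_cont: "continuous_on UNIV g \<Longrightarrow> g \<in> borel_measurable torus_measure"
  unfolding torus_measure_def
  by (rule continuous_imp_measurable_on_sets_lebesgue[OF continuous_on_subset torus_lebesgue]) auto

lemma AE_lborel_tm: "(AE x in lborel. P x) \<Longrightarrow> AE x in torus_measure. P x"
proof -
  assume "AE x in lborel. P x"
  then have "AE x in lebesgue. P x" by (simp add: AE_completion)
  then show ?thesis unfolding torus_measure_def
    by (subst AE_restrict_space_iff) (auto simp: torus_lebesgue elim: eventually_mono)
qed

lemma integral_tm_lborel:
  fixes g :: "real^'n::finite \<Rightarrow> complex"
  assumes g: "g \<in> borel_measurable borel"
  shows "(LINT x|torus_measure. g x) = (LINT x|lborel. indicator torus x *\<^sub>R g x)"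
proof -
  have "(LINT x|torus_measure. g x) = (LINT x|lebesgue. indicator torus x *\<^sub>R g x)"
    unfolding torus_measure_def using torus_lebesgue by (subst integral_restrict_space) auto
  also have "\<dots> = (LINT x|lborel. indicator torus x *\<^sub>R g x)"
  proof (intro integral_completion)
    have [measurable]: "g \<in> borel_measurable borel" by (rule g)
    have [measurable]: "torus \<in> sets lborel" using torus_borel by simp
    show "(\<lambda>x. indicat_real torus x *\<^sub>R g x) \<in> borel_measurable lborel" by measurable
  qed
  finally show ?thesis .
qed

lemma integral_lborel_prod:
  fixes f :: "'a::euclidean_space \<Rightarrow> real \<Rightarrow> complex"
  assumes int: "\<And>b. b \<in> Basis \<Longrightarrow> integrable lborel (f b)"
  shows "(LINT x|lborel. (\<Prod>b\<in>Basis. f b (x \<bullet> b))) = (\<Prod>b\<in>Basis. LINT t|lborel. f b t)"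
proof -
  interpret product_sigma_finite "\<lambda>_::'a. (lborel :: real measure)"
    by (simp add: product_sigma_finite_def lborel.sigma_finite_measure_axioms)
  have mf: "f b \<in> borel_measurable lborel" if "b \<in> Basis" for b
    using int[OF that] by auto
  have m2: "(\<lambda>x::'a. \<Prod>b\<in>Basis. f b (x \<bullet> b)) \<in> borel_measurable borel"
    using mf by (intro borel_measurable_prod) auto
  have "(LINT x|lborel. (\<Prod>b\<in>Basis. f b (x \<bullet> b)))
      = (LINT p|(\<Pi>\<^sub>M b\<in>Basis. lborel). (\<Prod>b\<in>Basis. f b ((\<Sum>b'\<in>Basis. p b' *\<^sub>R b') \<bullet> b)))"
    by (subst lborel_eq) (rule integral_distr[OF _ m2], simp)
  also have "\<dots> = (LINT p|(\<Pi>\<^sub>M b\<in>Basis. lborel). (\<Prod>b\<in>Basis. f b (p b)))"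
    by (intro Bochner_Integration.integral_cong refl prod.cong)
       (simp add: inner_sum_left inner_Basis if_distrib sum.delta cong: if_cong)
  also have "\<dots> = (\<Prod>b\<in>Basis. LINT t|lborel. f b t)"
    by (rule product_integral_prod) (auto simp: int)
  finally show ?thesis .
qed



lemma cis_as_exp: "cis (2 * pi * real_of_int j * t) = exp (t *\<^sub>R (\<i> * complex_of_real (2 * pi * real_of_int j)))"
  by (simp add: cis_conv_exp scaleR_conv_of_real mult_ac)

lemma int_cis_01:
  fixes j :: int
  shows "(LINT t|lborel. indicator {0..<1} t *\<^sub>R cis (2 * pi * real_of_int j * t)) = (if j = 0 then 1 else 0)"
proof -
  let ?f = "\<lambda>t. cis (2 * pi * real_of_int j * t)"
  have cont: "continuous_on {0..1} ?f" by (intro continuous_intros)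
  have [measurable]: "?f \<in> borel_measurable borel"
    by (intro borel_measurable_continuous_onI continuous_intros)
  have "(LINT t|lborel. indicator {0..<1} t *\<^sub>R ?f t) = (LINT t|lborel. indicator {0..1} t *\<^sub>R ?f t)"
    by (intro integral_cong_AE) (use AE_lborel_singleton[of "1::real"] in \<open>auto elim!: eventually_mono split: split_indicator\<close>)
  also have "\<dots> = integral {0..1} ?f"
    using set_borel_integral_eq_integral[of "{0..1}" ?f] borel_integrable_compact[OF _ cont]
    by (simp add: set_lebesgue_integral_def set_integrable_def)
  also have "\<dots> = (if j = 0 then 1 else 0)"
  proof (cases "j = 0")
    case True then show ?thesis by simp
  next
    case False
    define A where "A = \<i> * complex_of_real (2 * pi * real_of_int j)"
    have A0: "A \<noteq> 0" using False by (simp add: A_def)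
    have d: "((\<lambda>t. exp (t *\<^sub>R A) / A) has_vector_derivative ?f t) (at t within {0..1})" for t
    proof -
      have "((\<lambda>t. exp (t *\<^sub>R A) / A) has_vector_derivative (exp (t *\<^sub>R A) * A) / A) (at t within {0..1})"
        by (intro has_vector_derivative_divide exp_scaleR_has_vector_derivative_right)
      also have "(exp (t *\<^sub>R A) * A) / A = ?f t" using A0 by (simp add: A_def cis_as_exp)
      finally show ?thesis .
    qed
    have "(?f has_integral (exp (1 *\<^sub>R A) / A - exp (0 *\<^sub>R A) / A)) {0..1}"
      by (rule fundamental_theorem_of_calculus) (auto intro: d)
    moreover have "exp (1 *\<^sub>R A) = 1"
      using cis_as_exp[of j 1] by (simp add: A_def cis.ctr cos_int_2pin sin_int_2pin complex_eq_iff)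
    ultimately have "(?f has_integral 0) {0..1}" by simp
    then show ?thesis using False by (simp add: integral_unique)
  qed
  finally show ?thesis .
qed

definition bidx :: "real^'n::finite \<Rightarrow> 'n" where
  "bidx b = (SOME i. b = axis i 1)"

lemma bidx_axis[simp]: "bidx (axis i 1 :: real^'n::finite) = i"
  unfolding bidx_def by (rule some_equality) (auto simp: axis_eq_axis)

lemma Basis_vec_image: "(Basis :: (real^'n::finite) set) = (\<lambda>i. axis i 1) ` UNIV"
  by (auto simp: Basis_vec_def)

lemma inj_axis1: "inj (\<lambda>i. axis i (1::real) :: real^'n::finite)"
  by (rule injI) (simp add: axis_eq_axis)

lemma prod_Basis_vec:
  fixes h :: "real^'n::finite \<Rightarrow> 'a::comm_monoid_mult"
  shows "(\<Prod>b\<in>Basis. h b) = (\<Prod>i\<in>UNIV. h (axis i 1))"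
  by (simp add: Basis_vec_image prod.reindex[OF inj_axis1])

lemma ef_prod: "ef m x = (\<Prod>i\<in>UNIV. cis (2 * pi * real_of_int (m$i) * x$i))"
proof -
  have "ef m x = exp (\<Sum>i\<in>UNIV. \<i> * complex_of_real (2 * pi * real_of_int (m$i) * x$i))"
    unfolding ef_def cis_conv_exp by (simp add: sum_distrib_left mult_ac)
  also have "\<dots> = (\<Prod>i\<in>UNIV. cis (2 * pi * real_of_int (m$i) * x$i))"
    by (simp add: exp_sum cis_conv_exp)
  finally show ?thesis .
qed

lemma indicator_torus_prod:
  "(indicator torus x :: real) = (\<Prod>i\<in>UNIV. indicator {0..<1} (x$i))"
proof (cases "x \<in> torus")
  case True then show ?thesis by (simp add: torus_def indicator_def)
next
  case False
  then obtain i where "\<not> (0 \<le> x$i \<and> x$i < 1)" by (auto simp: torus_def)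
  then have "indicator {0..<1} (x$i) = (0::real)" by (simp add: indicator_def)
  then have "(\<Prod>i\<in>UNIV. indicator {0..<1} (x$i)) = (0::real)"
    by (intro prod_zero) auto
  with False show ?thesis by simp
qed

lemma integral_ef:
  fixes m :: "int^'n::finite"
  shows "(LINT x|torus_measure. ef m x) = (if m = 0 then 1 else 0)"
proof -
  define G where "G b t = indicator {0..<1} t *\<^sub>R cis (2 * pi * real_of_int (m $ bidx b) * t)"
    for b :: "real^'n" and t :: real
  have m: "ef m \<in> borel_measurable borel"
    using continuous_on_ef by (rule borel_measurable_continuous_onI)
  have eq: "indicator torus x *\<^sub>R ef m x = (\<Prod>b\<in>Basis. G b (x \<bullet> b))" for x :: "real^'n"
  proof -
    have "indicator torus x *\<^sub>R ef m x
        = (\<Prod>i\<in>UNIV. indicator {0..<1} (x$i) *\<^sub>R cis (2 * pi * real_of_int (m$i) * x$i))"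
      by (simp add: indicator_torus_prod ef_prod scaleR_conv_of_real prod.distrib of_real_prod)
    also have "\<dots> = (\<Prod>b\<in>Basis. G b (x \<bullet> b))"
      by (simp add: prod_Basis_vec G_def cart_eq_inner_axis)
    finally show ?thesis .
  qed
  have intG: "integrable lborel (G b)" for b
  proof -
    have "integrable lborel (\<lambda>t. indicator {0..1} t *\<^sub>R cis (2 * pi * real_of_int (m $ bidx b) * t))"
      by (intro borel_integrable_compact) (auto intro!: continuous_intros)
    moreover have [measurable]: "(\<lambda>t. cis (2 * pi * real_of_int (m $ bidx b) * t)) \<in> borel_measurable borel"
      by (intro borel_measurable_continuous_onI continuous_intros)
    ultimately show ?thesis unfolding G_def
      by (subst integrable_cong_AE[where g="\<lambda>t. indicator {0..1} t *\<^sub>R cis (2 * pi * real_of_int (m $ bidx b) * t)"])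
         (use AE_lborel_singleton[of "1::real"] in \<open>auto elim!: eventually_mono split: split_indicator\<close>)
  qed
  have "(LINT x|torus_measure. ef m x) = (LINT x|lborel. indicator torus x *\<^sub>R ef m x)"
    by (rule integral_tm_lborel[OF m])
  also have "\<dots> = (LINT x|lborel. (\<Prod>b\<in>Basis. G b (x \<bullet> b)))"
    by (simp add: eq)
  also have "\<dots> = (\<Prod>b\<in>Basis. LINT t|lborel. G b t)"
    by (rule integral_lborel_prod) (simp add: intG)
  also have "\<dots> = (\<Prod>i\<in>UNIV. if m$i = 0 then 1 else 0)"
    by (simp add: prod_Basis_vec G_def int_cis_01)
  also have "\<dots> = (if m = 0 then 1 else 0)"
  proof (cases "m = 0")
    case False
    then obtain i where "m$i \<noteq> 0" by (auto simp: vec_eq_iff)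
    then have "(\<Prod>i\<in>UNIV. if m$i = 0 then 1 else (0::complex)) = 0" by (intro prod_zero) auto
    then show ?thesis using False by simp
  qed simp
  finally show ?thesis .
qed



inductive trigpoly :: "(real^'n::finite \<Rightarrow> complex) \<Rightarrow> bool" where
  tp_ef: "trigpoly (\<lambda>x. a * ef k x)"
| tp_add: "trigpoly p \<Longrightarrow> trigpoly q \<Longrightarrow> trigpoly (\<lambda>x. p x + q x)"

lemma tp_const: "trigpoly (\<lambda>x. a)"
  using tp_ef[of a 0] by simp

lemma tp_scale: "trigpoly p \<Longrightarrow> trigpoly (\<lambda>x. a * p x)"
proof (induction rule: trigpoly.induct)
  case (tp_ef b k) then show ?case using trigpoly.tp_ef[of "a * b" k] by (simp add: mult_ac)
next
  case (tp_add p q) then show ?case using trigpoly.tp_add by (simp add: distrib_left)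
qed

lemma tp_mult: "trigpoly p \<Longrightarrow> trigpoly q \<Longrightarrow> trigpoly (\<lambda>x. p x * q x)"
proof (induction arbitrary: q rule: trigpoly.induct)
  case (tp_ef a k)
  from tp_ef.prems show ?case
  proof (induction rule: trigpoly.induct)
    case (tp_ef b m) then show ?case
      using trigpoly.tp_ef[of "a * b" "k + m"] by (simp add: ef_add mult_ac)
  next
    case (tp_add p q) then show ?case using trigpoly.tp_add by (simp add: distrib_left)
  qed
next
  case (tp_add p1 p2)
  show ?case using trigpoly.tp_add[OF tp_add.IH(1)[OF tp_add.prems] tp_add.IH(2)[OF tp_add.prems]]
    by (simp add: distrib_right)
qed

lemma tp_sum: "finite A \<Longrightarrow> (\<And>i. i \<in> A \<Longrightarrow> trigpoly (p i)) \<Longrightarrow> trigpoly (\<lambda>x. \<Sum>i\<in>A. p i x)"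
proof (induction rule: finite_induct)
  case empty then show ?case using tp_const[of 0] by simp
next
  case (insert a F) then show ?case using tp_add[of "p a" "\<lambda>x. \<Sum>i\<in>F. p i x"] by simp
qed

lemma tp_continuous: "trigpoly p \<Longrightarrow> continuous_on UNIV p"
  by (induction rule: trigpoly.induct) (auto intro!: continuous_intros continuous_on_ef)

definition Emb :: "real^'n::finite \<Rightarrow> complex^'n" where
  "Emb x = (\<chi> i. cis (2 * pi * x$i))"

lemma ef_axis:
  fixes i :: "'n::finite" and x :: "real^'n"
  shows "ef (axis i 1) x = cis (2 * pi * x$i)"
proof -
  have "(\<Sum>j\<in>UNIV. real_of_int ((axis i 1 :: int^'n)$j) * x$j) = (\<Sum>j\<in>UNIV. if j = i then x$j else 0)"
    by (rule sum.cong) (auto simp: axis_def)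
  then show ?thesis unfolding ef_def by simp
qed

lemma ef_axis_neg:
  fixes i :: "'n::finite" and x :: "real^'n"
  shows "ef (- axis i 1) x = cis (- (2 * pi * x$i))"
proof -
  have "(\<Sum>j\<in>UNIV. real_of_int ((- axis i 1 :: int^'n)$j) * x$j) = (\<Sum>j\<in>UNIV. if j = i then - x$j else 0)"
    by (rule sum.cong) (auto simp: axis_def)
  then show ?thesis unfolding ef_def by simp
qed

lemma tp_cos: "trigpoly (\<lambda>x. complex_of_real (cos (2 * pi * x$i)))"
proof -
  have "trigpoly (\<lambda>x. (1/2) * ef (axis i 1) x + (1/2) * ef (- axis i 1) x)"
    by (intro tp_add tp_ef)
  moreover have "(1/2) * ef (axis i 1) x + (1/2) * ef (- axis i 1) x = complex_of_real (cos (2 * pi * x$i))" for x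
    by (simp add: ef_axis ef_axis_neg complex_eq_iff)
  ultimately show ?thesis by simp
qed

lemma tp_sin: "trigpoly (\<lambda>x. complex_of_real (sin (2 * pi * x$i)))"
proof -
  have "trigpoly (\<lambda>x. (- \<i>/2) * ef (axis i 1) x + (\<i>/2) * ef (- axis i 1) x)"
    by (intro tp_add tp_ef)
  moreover have "(- \<i>/2) * ef (axis i 1) x + (\<i>/2) * ef (- axis i 1) x = complex_of_real (sin (2 * pi * x$i))" for x
    by (simp add: ef_axis ef_axis_neg complex_eq_iff)
  ultimately show ?thesis by simp
qed

lemma tp_inner_Basis:
  assumes "b \<in> (Basis :: (complex^'n::finite) set)"
  shows "trigpoly (\<lambda>x. complex_of_real (Emb x \<bullet> b))"
proof -
  obtain i u where b: "b = axis i u" "u \<in> {1, \<i>}" using assms by (auto simp: Basis_vec_def Basis_complex_def)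
  show ?thesis
  proof (cases "u = 1")
    case True
    then show ?thesis using tp_cos[of i] by (simp add: b inner_axis Emb_def inner_complex_def)
  next
    case False
    then have "u = \<i>" using b by auto
    then show ?thesis using tp_sin[of i] by (simp add: b inner_axis Emb_def inner_complex_def)
  qed
qed

lemma tp_real_poly:
  fixes q :: "complex^'n::finite \<Rightarrow> real"
  assumes "real_polynomial_function q"
  shows "trigpoly (\<lambda>x. complex_of_real (q (Emb x)))"
  using assms
proof (induction rule: real_polynomial_function.induct)
  case (linear f)
  have lin: "linear f" using linear bounded_linear.linear by blast
  have eq: "f z = (\<Sum>b\<in>Basis. (z \<bullet> b) * f b)" for z
  proof -
    have "f z = f (\<Sum>b\<in>Basis. (z \<bullet> b) *\<^sub>R b)" by (simp add: euclidean_representation)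
    also have "\<dots> = (\<Sum>b\<in>Basis. (z \<bullet> b) * f b)"
      by (simp add: linear_sum[OF lin] linear_scale[OF lin])
    finally show ?thesis .
  qed
  have "trigpoly (\<lambda>x. \<Sum>b\<in>Basis. complex_of_real (f b) * complex_of_real (Emb x \<bullet> b))"
    by (intro tp_sum tp_scale tp_inner_Basis) auto
  moreover have "complex_of_real (f (Emb x)) = (\<Sum>b\<in>Basis. complex_of_real (f b) * complex_of_real (Emb x \<bullet> b))" for x
    by (subst eq) (simp add: mult_ac)
  ultimately show ?case by simp
next
  case (const c) then show ?case by (rule tp_const)
next
  case (add f g) then show ?case using tp_add[OF add.IH] by simp
next
  case (mult f g) then show ?case using tp_mult[OF mult.IH] by simp
qed

lemma tp_poly:
  fixes g :: "complex^'n::finite \<Rightarrow> complex"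
  assumes "polynomial_function g"
  shows "trigpoly (\<lambda>x. g (Emb x))"
proof -
  have "real_polynomial_function (Re \<circ> g)" "real_polynomial_function (Im \<circ> g)"
    using assms bounded_linear_Re bounded_linear_Im unfolding polynomial_function_def by blast+
  then have "trigpoly (\<lambda>x. complex_of_real (Re (g (Emb x))))" "trigpoly (\<lambda>x. complex_of_real (Im (g (Emb x))))"
    using tp_real_poly by (auto simp: o_def)
  then have "trigpoly (\<lambda>x. complex_of_real (Re (g (Emb x))) + \<i> * complex_of_real (Im (g (Emb x))))"
    by (intro tp_add tp_scale)
  moreover have "complex_of_real (Re z) + \<i> * complex_of_real (Im z) = z" for z
    by (simp add: complex_eq_iff)
  ultimately show ?thesis by simp
qed



lemma borel_tm: "g \<in> borel_measurable borel \<Longrightarrow> g \<in> borel_measurable torus_measure"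
  unfolding torus_measure_def
  by (intro measurable_restrict_space1 measurable_completion) simp

lemma tp_orth:
  assumes h: "integrable torus_measure h" and c0: "\<And>k. fourier_coeff k h = 0"
    and p: "trigpoly p"
  shows "integrable torus_measure (\<lambda>x. h x * p x) \<and> (LINT x|torus_measure. h x * p x) = 0"
  using p
proof (induction rule: trigpoly.induct)
  case (tp_ef a k)
  have [measurable]: "ef k \<in> borel_measurable torus_measure" by (rule meas_cont[OF continuous_on_ef])
  have [measurable]: "h \<in> borel_measurable torus_measure" using h by auto
  have i1: "integrable torus_measure (\<lambda>x. h x * ef k x)"
    by (rule Bochner_Integration.integrable_bound[OF h]) (auto simp: norm_mult)
  have "(LINT x|torus_measure. h x * ef k x) = fourier_coeff (- k) h"
    by (simp add: fourier_coeff_ef)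
  also have "\<dots> = 0" by (rule c0)
  finally have "(LINT x|torus_measure. h x * ef k x) = 0" .
  moreover have "(\<lambda>x. h x * (a * ef k x)) = (\<lambda>x. a * (h x * ef k x))" by (simp add: mult_ac)
  ultimately show ?case using i1 by (simp add: integrable_mult_right)
next
  case (tp_add p q)
  then show ?case by (simp add: distrib_left)
qed

lemma norm_Emb: "norm (Emb x :: complex^'n::finite) \<le> real CARD('n)"
proof -
  have "norm (Emb x :: complex^'n) \<le> (\<Sum>i\<in>UNIV. norm ((Emb x :: complex^'n)$i))"
    unfolding norm_vec_def by (rule L2_set_le_sum) simp
  also have "\<dots> = real CARD('n)" by (simp add: Emb_def)
  finally show ?thesis .
qed

lemma continuous_Emb: "continuous_on UNIV (Emb :: real^'n::finite \<Rightarrow> complex^'n)"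
  unfolding Emb_def by (intro continuous_on_vec_lambda continuous_intros)

lemma eps_zero:
  fixes I :: complex and N :: real
  assumes "\<And>e. e > 0 \<Longrightarrow> norm I \<le> e * N"
  shows "I = 0"
proof (rule ccontr)
  assume "I \<noteq> 0"
  then have n: "norm I > 0" by simp
  have N: "N > 0"
  proof (rule ccontr)
    assume "\<not> N > 0"
    then have "norm I \<le> 1 * N" using assms[of 1] by simp
    with \<open>\<not> N > 0\<close> n show False by simp
  qed
  have "norm I \<le> (norm I / (2 * N)) * N" using assms[of "norm I / (2*N)"] n N by simp
  also have "\<dots> = norm I / 2" using N by simp
  finally show False using n by simp
qed

lemma cont_orth:
  fixes \<phi> :: "complex^'n::finite \<Rightarrow> complex"
  assumes h: "integrable torus_measure h" and c0: "\<And>k. fourier_coeff k h = 0"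
    and \<phi>: "continuous_on UNIV \<phi>"
  shows "integrable torus_measure (\<lambda>x. h x * \<phi> (Emb x)) \<and> (LINT x|torus_measure. h x * \<phi> (Emb x)) = 0"
proof -
  define K where "K = cball (0::complex^'n) (real CARD('n))"
  have K: "compact K" by (simp add: K_def)
  have EK: "Emb x \<in> K" for x using norm_Emb[of x] by (simp add: K_def)
  obtain B where B: "\<And>z. z \<in> K \<Longrightarrow> norm (\<phi> z) \<le> B"
    using compact_imp_bounded[OF compact_continuous_image[OF continuous_on_subset[OF \<phi>] K]]
    by (auto simp: bounded_iff)
  have mh: "h \<in> borel_measurable torus_measure" using h by auto
  have Bb: "norm (\<phi> (Emb x)) \<le> \<bar>B\<bar>" for x using B[OF EK[of x]] by linarith
  have hb: "norm (h x) * norm (\<phi> (Emb x)) \<le> \<bar>B\<bar> * norm (h x)" for x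
    by (metis Bb mult.commute mult_left_mono norm_ge_zero)
  have mE: "(\<lambda>x. g (Emb x)) \<in> borel_measurable torus_measure" if "continuous_on UNIV g" for g :: "complex^'n \<Rightarrow> complex"
    by (intro meas_cont continuous_on_compose2[OF that continuous_Emb]) auto
  have int: "integrable torus_measure (\<lambda>x. h x * \<phi> (Emb x))"
    by (rule Bochner_Integration.integrable_bound[OF integrable_mult_right[OF h, of "complex_of_real B"]])
       (auto intro!: borel_measurable_times mh mE \<phi> simp: norm_mult hb intro!: AE_I2)
  have "norm (LINT x|torus_measure. h x * \<phi> (Emb x)) \<le> e * (LINT x|torus_measure. norm (h x))" if e: "e > 0" for e
  proof -
    obtain g where g: "polynomial_function g" "\<And>z. z \<in> K \<Longrightarrow> norm (\<phi> z - g z) < e"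
      using Stone_Weierstrass_polynomial_function[OF K continuous_on_subset[OF \<phi>] e] by auto
    have tg: "integrable torus_measure (\<lambda>x. h x * g (Emb x)) \<and> (LINT x|torus_measure. h x * g (Emb x)) = 0"
      by (rule tp_orth[OF h c0 tp_poly[OF g(1)]])
    have "(LINT x|torus_measure. h x * \<phi> (Emb x))
        = (LINT x|torus_measure. h x * \<phi> (Emb x)) - (LINT x|torus_measure. h x * g (Emb x))"
      using tg by simp
    also have "\<dots> = (LINT x|torus_measure. h x * \<phi> (Emb x) - h x * g (Emb x))"
      using tg int by (simp add: Bochner_Integration.integral_diff)
    finally have eq: "(LINT x|torus_measure. h x * \<phi> (Emb x)) = (LINT x|torus_measure. h x * (\<phi> (Emb x) - g (Emb x)))"
      by (simp add: right_diff_distrib)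
    have "norm (LINT x|torus_measure. h x * (\<phi> (Emb x) - g (Emb x))) \<le> (LINT x|torus_measure. norm (h x * (\<phi> (Emb x) - g (Emb x))))"
      by (rule integral_norm_bound)
    also have "\<dots> \<le> (LINT x|torus_measure. e * norm (h x))"
    proof (rule integral_mono)
      show "integrable torus_measure (\<lambda>x. norm (h x * (\<phi> (Emb x) - g (Emb x))))"
        using int tg by (intro integrable_norm) (simp add: right_diff_distrib)
      show "integrable torus_measure (\<lambda>x. e * norm (h x))" using h by auto
      show "norm (h x * (\<phi> (Emb x) - g (Emb x))) \<le> e * norm (h x)" for x
        using g(2)[OF EK[of x]] unfolding norm_mult
        by (metis less_imp_le mult.commute mult_left_mono norm_ge_zero)
    qed
    also have "\<dots> = e * (LINT x|torus_measure. norm (h x))" by simp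
    finally show ?thesis using eq by simp
  qed
  then have "(LINT x|torus_measure. h x * \<phi> (Emb x)) = 0" by (rule eps_zero)
  with int show ?thesis by simp
qed

lemma cos_arc:
  fixes x a b :: real
  assumes x: "0 \<le> x" "x < 1" and ab: "0 \<le> a" "a < b" "b \<le> 1"
  shows "(a < x \<and> x < b) \<longleftrightarrow> cos (2 * pi * ((b - a) / 2)) < cos (2 * pi * (x - (a + b) / 2))"
proof -
  define r where "r = (b - a) / 2"
  define t where "t = x - (a + b) / 2"
  have r: "0 < r" "r \<le> 1/2" using ab by (auto simp: r_def)
  have ct: "cos (2 * pi * t) = cos (2 * pi * \<bar>t\<bar>)"
    by (metis cos_abs_real abs_mult abs_of_nonneg pi_ge_zero mult_nonneg_nonneg zero_le_numeral)
  have iff: "(a < x \<and> x < b) \<longleftrightarrow> \<bar>t\<bar> < r" unfolding t_def r_def abs_less_iff by (auto simp: field_simps)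
  show ?thesis
  proof
    assume "a < x \<and> x < b"
    then have "\<bar>t\<bar> < r" using iff by simp
    then have "cos (2 * pi * r) < cos (2 * pi * \<bar>t\<bar>)"
      using r by (intro cos_monotone_0_pi) auto
    then show "cos (2 * pi * ((b - a) / 2)) < cos (2 * pi * (x - (a + b) / 2))"
      using ct by (simp add: r_def t_def)
  next
    assume less: "cos (2 * pi * ((b - a) / 2)) < cos (2 * pi * (x - (a + b) / 2))"
    show "a < x \<and> x < b"
    proof (rule ccontr)
      assume "\<not> (a < x \<and> x < b)"
      then have tr: "r \<le> \<bar>t\<bar>" using iff by simp
      have "cos (2 * pi * \<bar>t\<bar>) \<le> cos (2 * pi * r)"
      proof (cases "\<bar>t\<bar> \<le> 1/2")
        case True
        then show ?thesis using r tr by (intro cos_monotone_0_pi_le) auto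
      next
        case False
        define s where "s = 1 - \<bar>t\<bar>"
        have s2: "s \<le> 1/2" using False by (simp add: s_def)
        have s1: "r \<le> s"
          using False x ab by (auto simp: s_def t_def r_def abs_if field_simps split: if_splits; linarith)
        note s = s1 s2
        have "cos (2 * pi * \<bar>t\<bar>) = cos (2 * pi * s)"
          using cos_2pi_minus[of "2 * pi * s"] by (simp add: s_def algebra_simps)
        also have "\<dots> \<le> cos (2 * pi * r)"
          using r s by (intro cos_monotone_0_pi_le) auto
        finally show ?thesis .
      qed
      then show False using less ct by (simp add: r_def t_def)
    qed
  qed
qed



definition arcset :: "real^'n::finite \<Rightarrow> real^'n \<Rightarrow> (real^'n) set" where
  "arcset c r = {x. \<forall>i. cos (2 * pi * r$i) < cos (2 * pi * (x$i - c$i))}"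

lemma arcset_borel: "arcset c r \<in> sets borel"
proof -
  have "arcset c r = (\<Inter>i\<in>UNIV. {x. cos (2 * pi * r$i) < cos (2 * pi * (x$i - c$i))})"
    by (auto simp: arcset_def)
  also have "open \<dots>"
    by (intro open_INT ballI open_Collect_less continuous_intros) auto
  finally show ?thesis by simp
qed

definition clamp01 :: "real \<Rightarrow> real" where "clamp01 t = max 0 (min 1 t)"

lemma continuous_on_clamp01: "continuous_on UNIV clamp01"
  unfolding clamp01_def by (intro continuous_intros)

lemma clamp01_limit: "(\<lambda>n. clamp01 (real n * t)) \<longlonglongrightarrow> (if t > 0 then 1 else 0)"
proof (cases "t > 0")
  case True
  have "eventually (\<lambda>n. clamp01 (real n * t) = 1) sequentially"
  proof (rule eventually_sequentiallyI[of "nat \<lceil>1/t\<rceil>"])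
    fix n assume "nat \<lceil>1/t\<rceil> \<le> n"
    then have "1/t \<le> real n" by linarith
    then have "1 \<le> real n * t" using True by (simp add: field_simps)
    then show "clamp01 (real n * t) = 1" by (simp add: clamp01_def)
  qed
  then show ?thesis using True by (simp add: tendsto_eventually)
next
  case False
  have "clamp01 (real n * t) = 0" for n
  proof -
    have "real n * t \<le> 0" using False by (simp add: mult_nonneg_nonpos)
    then show ?thesis by (simp add: clamp01_def)
  qed
  then show ?thesis using False by simp
qed

lemma clamp01_bounds: "0 \<le> clamp01 t" "clamp01 t \<le> 1"
  by (auto simp: clamp01_def)

definition phin :: "real^'n::finite \<Rightarrow> real^'n \<Rightarrow> nat \<Rightarrow> complex^'n \<Rightarrow> complex" where
  "phin c r n z = complex_of_real (\<Prod>i\<in>UNIV. clamp01 (real n * (Re (z$i * cis (- (2 * pi * c$i))) - cos (2 * pi * r$i))))"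

lemma continuous_phin: "continuous_on UNIV (phin c r n)"
  unfolding phin_def
  by (intro continuous_intros continuous_on_compose2[OF continuous_on_clamp01]) auto

lemma phin_Emb: "phin c r n (Emb x) = complex_of_real (\<Prod>i\<in>UNIV. clamp01 (real n * (cos (2 * pi * (x$i - c$i)) - cos (2 * pi * r$i))))"
  unfolding phin_def Emb_def by (simp add: cis_mult right_diff_distrib)

lemma norm_phin_Emb: "norm (phin c r n (Emb x)) \<le> 1"
  unfolding phin_Emb norm_of_real
  by (subst abs_of_nonneg) (auto intro!: prod_nonneg prod_le_1 simp: clamp01_bounds)

lemma phin_limit: "(\<lambda>n. phin c r n (Emb x)) \<longlonglongrightarrow> indicator (arcset c r) x"
proof -
  have "(\<lambda>n. \<Prod>i\<in>UNIV. clamp01 (real n * (cos (2 * pi * (x$i - c$i)) - cos (2 * pi * r$i))))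
        \<longlonglongrightarrow> (\<Prod>i\<in>UNIV. if cos (2 * pi * (x$i - c$i)) - cos (2 * pi * r$i) > 0 then 1 else 0)"
    by (rule tendsto_prod) (rule clamp01_limit)
  also have "(\<Prod>i\<in>UNIV. if cos (2 * pi * (x$i - c$i)) - cos (2 * pi * r$i) > 0 then 1 else (0::real)) = indicator (arcset c r) x"
  proof (cases "x \<in> arcset c r")
    case True then show ?thesis by (simp add: arcset_def)
  next
    case False
    then obtain i where "\<not> cos (2 * pi * r$i) < cos (2 * pi * (x$i - c$i))" by (auto simp: arcset_def)
    then have "(\<Prod>i\<in>UNIV. if cos (2 * pi * (x$i - c$i)) - cos (2 * pi * r$i) > 0 then 1 else (0::real)) = 0"
      by (intro prod_zero) auto
    with False show ?thesis by simp
  qed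
  finally have L: "(\<lambda>n. \<Prod>i\<in>UNIV. clamp01 (real n * (cos (2 * pi * (x$i - c$i)) - cos (2 * pi * r$i))))
        \<longlonglongrightarrow> indicator (arcset c r) x" .
  have E: "complex_of_real (indicator (arcset c r) x) = indicator (arcset c r) x"
    by (simp split: split_indicator)
  show ?thesis unfolding phin_Emb E[symmetric] by (rule tendsto_of_real[OF L])
qed

lemma arc_orth:
  assumes h: "integrable torus_measure h" and c0: "\<And>k. fourier_coeff k h = 0"
  shows "(LINT x|torus_measure. h x * indicator (arcset c r) x) = 0"
proof -
  have mh[measurable]: "h \<in> borel_measurable torus_measure" using h by auto
  have [measurable]: "(\<lambda>x. indicator (arcset c r) x :: complex) \<in> borel_measurable torus_measure"
    by (intro borel_tm borel_measurable_indicator arcset_borel)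
  have [measurable]: "(\<lambda>x. phin c r n (Emb x)) \<in> borel_measurable torus_measure" for n
    by (intro meas_cont continuous_on_compose2[OF continuous_phin continuous_Emb]) auto
  have "(\<lambda>n. LINT x|torus_measure. h x * phin c r n (Emb x)) \<longlonglongrightarrow> (LINT x|torus_measure. h x * indicator (arcset c r) x)"
  proof (rule integral_dominated_convergence[where w="\<lambda>x. norm (h x)"])
    show "integrable torus_measure (\<lambda>x. norm (h x))" using h by auto
    show "AE x in torus_measure. (\<lambda>n. h x * phin c r n (Emb x)) \<longlonglongrightarrow> h x * indicator (arcset c r) x"
      by (intro AE_I2 tendsto_mult_left phin_limit)
    show "AE x in torus_measure. norm (h x * phin c r n (Emb x)) \<le> norm (h x)" for n
      by (intro AE_I2) (simp add: norm_mult mult_left_le norm_phin_Emb)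
  qed measurable
  moreover have "(LINT x|torus_measure. h x * phin c r n (Emb x)) = 0" for n
    using cont_orth[OF h c0 continuous_phin] by simp
  ultimately have "(\<lambda>n. 0::complex) \<longlonglongrightarrow> (LINT x|torus_measure. h x * indicator (arcset c r) x)"
    by simp
  then show ?thesis by (metis LIMSEQ_const_iff)
qed



lemma AE_lebesgue_tm: "(AE x in lebesgue. P x) \<Longrightarrow> AE x in torus_measure. P x"
  unfolding torus_measure_def
  by (subst AE_restrict_space_iff) (auto simp: torus_lebesgue elim: eventually_mono)

lemma AE_coords_nonzero: "AE x in (torus_measure :: (real^'n::finite) measure). \<forall>i\<in>UNIV. x$i \<noteq> 0"
proof (rule AE_finite_allI)
  fix i :: 'n
  have "negligible {x :: real^'n. axis i 1 \<bullet> x = 0}"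
    by (rule negligible_hyperplane) (simp add: axis_eq_0_iff)
  then have "AE x in lebesgue. (x :: real^'n)$i \<noteq> 0"
    unfolding eventually_ae_filter_negligible by (auto simp: inner_axis')
  then show "AE x in torus_measure. (x :: real^'n)$i \<noteq> 0" by (rule AE_lebesgue_tm)
qed simp

lemma box01_orth:
  fixes a b :: "real^'n::finite"
  assumes h: "integrable torus_measure h" and c0: "\<And>k. fourier_coeff k h = 0"
    and ab: "\<And>i. 0 \<le> a$i" "\<And>i. a$i < b$i" "\<And>i. b$i \<le> 1"
  shows "(LINT x|torus_measure. h x * indicator (box a b) x) = 0"
proof -
  define c :: "real^'n" where "c = (\<chi> i. (a$i + b$i) / 2)"
  define r :: "real^'n" where "r = (\<chi> i. (b$i - a$i) / 2)"
  have "x \<in> box a b \<longleftrightarrow> x \<in> arcset c r" if x: "x \<in> torus" for x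
  proof -
    have "(a$i < x$i \<and> x$i < b$i) \<longleftrightarrow> cos (2 * pi * r$i) < cos (2 * pi * (x$i - c$i))" for i
      using cos_arc[of "x$i" "a$i" "b$i"] x ab[of i] by (simp add: torus_def c_def r_def)
    then show ?thesis by (simp add: mem_box_cart arcset_def)
  qed
  then have "(LINT x|torus_measure. h x * indicator (box a b) x) = (LINT x|torus_measure. h x * indicator (arcset c r) x)"
    by (intro Bochner_Integration.integral_cong refl) (simp split: split_indicator)
  also have "\<dots> = 0" by (rule arc_orth[OF h c0])
  finally show ?thesis .
qed

lemma box_orth:
  fixes a b :: "real^'n::finite"
  assumes h: "integrable torus_measure h" and c0: "\<And>k. fourier_coeff k h = 0"
  shows "(LINT x|torus_measure. h x * indicator (box a b) x) = 0"
proof -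
  define a' :: "real^'n" where "a' = (\<chi> i. max (a$i) 0)"
  define b' :: "real^'n" where "b' = (\<chi> i. min (b$i) 1)"
  have mh[measurable]: "h \<in> borel_measurable torus_measure" using h by auto
  have mi[measurable]: "(\<lambda>x. indicator (box u v) x :: complex) \<in> borel_measurable torus_measure" for u v :: "real^'n"
    by (intro borel_tm borel_measurable_indicator) simp
  have "AE x in torus_measure. h x * indicator (box a b) x = h x * indicator (box a' b') x"
    using AE_coords_nonzero AE_space[of torus_measure]
  proof (eventually_elim)
    fix x :: "real^'n" assume nz: "\<forall>i\<in>UNIV. x$i \<noteq> 0" and "x \<in> space torus_measure"
    then have T: "x \<in> torus" by simp
    have pos: "\<forall>i. 0 < x$i \<and> x$i < 1" using T nz by (auto simp: torus_def less_le)
    have "x \<in> box a b \<longleftrightarrow> x \<in> box a' b'"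
      using pos by (auto simp: mem_box_cart a'_def b'_def)
    then show "h x * indicator (box a b) x = h x * indicator (box a' b') x"
      by (simp split: split_indicator)
  qed
  then have "(LINT x|torus_measure. h x * indicator (box a b) x) = (LINT x|torus_measure. h x * indicator (box a' b') x)"
    by (intro integral_cong_AE) measurable
  also have "\<dots> = 0"
  proof (cases "\<forall>i. a'$i < b'$i")
    case True
    show ?thesis
      by (rule box01_orth[OF h c0]) (use True in \<open>auto simp: a'_def b'_def\<close>)
  next
    case False
    then have "box a' b' = {}" by (auto simp: mem_box_cart) (meson less_trans not_less)
    then show ?thesis by simp
  qed
  finally show ?thesis .
qed

lemma borel_orth:
  fixes h :: "real^'n::finite \<Rightarrow> complex"
  assumes h: "integrable torus_measure h" and c0: "\<And>k. fourier_coeff k h = 0"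
    and B: "B \<in> sets borel"
  shows "(LINT x|torus_measure. h x * indicator B x) = 0"
proof -
  let ?G = "range (\<lambda>(a, b). box a b :: (real^'n) set)"
  have mh[measurable]: "h \<in> borel_measurable torus_measure" using h by auto
  have mi: "(\<lambda>x. h x * indicator A x) \<in> borel_measurable torus_measure" if "A \<in> sets borel" for A :: "(real^'n) set"
  proof -
    have [measurable]: "(\<lambda>x. indicator A x :: complex) \<in> borel_measurable torus_measure"
      by (intro borel_tm borel_measurable_indicator that)
    show ?thesis by measurable
  qed
  have int: "integrable torus_measure (\<lambda>x. h x * indicator A x)" if "A \<in> sets borel" for A :: "(real^'n) set"
    by (rule Bochner_Integration.integrable_bound[OF h mi[OF that]])
       (auto intro!: AE_I2 simp: norm_mult split: split_indicator)
  have Gs: "sets borel = sigma_sets UNIV ?G"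
    by (simp add: borel_eq_box)
  have LH: "(LINT x|torus_measure. h x) = 0"
    using c0[of 0] by (simp add: fourier_coeff_ef)
  have IS: "Int_stable ?G" by (auto simp: Int_stable_def box_Int_box)
  have GP: "?G \<subseteq> Pow UNIV" by simp
  from B have B': "B \<in> sigma_sets UNIV ?G" using Gs by simp
  from IS GP B' show ?thesis
  proof (induction rule: sigma_sets_induct_disjoint)
    case (basic A)
    then obtain a b where "A = box a b" by auto
    then show ?case using box_orth[OF h c0] by simp
  next
    case empty show ?case by simp
  next
    case (compl A)
    then have A: "A \<in> sets borel" using Gs by simp
    have "(LINT x|torus_measure. h x * indicator (UNIV - A) x) = (LINT x|torus_measure. h x - h x * indicator A x)"
      by (intro Bochner_Integration.integral_cong refl) (simp split: split_indicator)
    also have "\<dots> = (LINT x|torus_measure. h x) - (LINT x|torus_measure. h x * indicator A x)"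
      by (rule Bochner_Integration.integral_diff[OF h int[OF A]])
    also have "\<dots> = 0" using LH compl.IH by simp
    finally show ?case .
  next
    case (union A)
    have Ab: "A i \<in> sets borel" for i using union.hyps(2) Gs by auto
    define U where "U n = (\<Union>i\<in>{..<n}. A i)" for n
    have Ub: "U n \<in> sets borel" for n unfolding U_def using Ab by auto
    have U0: "(LINT x|torus_measure. h x * indicator (U n) x) = 0" for n
    proof (induction n)
      case 0 then show ?case by (simp add: U_def)
    next
      case (Suc n)
      have disj: "U n \<inter> A n = {}"
        using union.hyps(1) unfolding U_def disjoint_family_on_def by (metis (no_types, lifting) UN_iff disjoint_iff lessThan_iff less_irrefl UNIV_I)
      have "U (Suc n) = U n \<union> A n" by (auto simp: U_def lessThan_Suc)
      then have "(LINT x|torus_measure. h x * indicator (U (Suc n)) x)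
          = (LINT x|torus_measure. h x * indicator (U n) x + h x * indicator (A n) x)"
        using disj by (intro Bochner_Integration.integral_cong refl) (auto split: split_indicator)
      also have "\<dots> = 0"
        using Suc.IH union.IH[of n] by (simp add: Bochner_Integration.integral_add int Ub Ab)
      finally show ?case .
    qed
    have "(\<lambda>n. LINT x|torus_measure. h x * indicator (U n) x) \<longlonglongrightarrow> (LINT x|torus_measure. h x * indicator (\<Union>i. A i) x)"
    proof (rule integral_dominated_convergence[where w="\<lambda>x. norm (h x)"])
      show "(\<lambda>x. h x * indicator (\<Union>i. A i) x) \<in> borel_measurable torus_measure"
        using Ab by (intro mi) auto
      show "(\<lambda>x. h x * indicator (U n) x) \<in> borel_measurable torus_measure" for n by (intro mi Ub)
      show "integrable torus_measure (\<lambda>x. norm (h x))" using h by auto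
      show "AE x in torus_measure. (\<lambda>n. h x * indicator (U n) x) \<longlonglongrightarrow> h x * indicator (\<Union>i. A i) x"
        unfolding U_def by (intro AE_I2 tendsto_mult_left LIMSEQ_indicator_UN)
      show "AE x in torus_measure. norm (h x * indicator (U n) x) \<le> norm (h x)" for n
        by (intro AE_I2) (auto simp: norm_mult split: split_indicator)
    qed
    then have "(\<lambda>n. 0::complex) \<longlonglongrightarrow> (LINT x|torus_measure. h x * indicator (\<Union>i. A i) x)"
      using U0 by simp
    then show ?case by (metis LIMSEQ_const_iff)
  qed
qed

lemma fourier_uniqueness:
  fixes h :: "real^'n::finite \<Rightarrow> complex"
  assumes h: "integrable torus_measure h" and c0: "\<And>k. fourier_coeff k h = 0"
  shows "AE x in torus_measure. h x = 0"
proof -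
  interpret finite_measure "torus_measure :: (real^'n) measure" by (rule finite_tm)
  show ?thesis
  proof (rule density_zero[OF h])
  fix A :: "(real^'n) set" assume A: "A \<in> sets torus_measure"
  then obtain A' where A': "A' \<in> sets lebesgue" "A = torus \<inter> A'"
    by (auto simp: torus_measure_def sets_restrict_space)
  from A'(1) obtain S N N' where SN: "A' = S \<union> N" "N \<subseteq> N'" "N' \<in> null_sets lborel" "S \<in> sets lborel"
    by (rule sets_completionE)
  have mh[measurable]: "h \<in> borel_measurable torus_measure" using h by auto
  have [measurable]: "A \<in> sets torus_measure" by (rule A)
  have [measurable]: "(\<lambda>x. indicator S x :: complex) \<in> borel_measurable torus_measure"
    using SN(4) by (intro borel_tm borel_measurable_indicator) simp
  have "AE x in (torus_measure :: (real^'n) measure). x \<notin> N'"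
    by (rule AE_lborel_tm[OF AE_not_in[OF SN(3)]])
  then have "AE x in torus_measure. indicator A x *\<^sub>R h x = h x * indicator S x"
    using AE_space[of "torus_measure :: (real^'n) measure"]
    by eventually_elim (use A' SN in \<open>auto split: split_indicator\<close>)
  then have "set_lebesgue_integral torus_measure A h = (LINT x|torus_measure. h x * indicator S x)"
    unfolding set_lebesgue_integral_def by (intro integral_cong_AE) measurable
  also have "\<dots> = 0"
    using SN(4) by (intro borel_orth[OF h c0]) simp
  finally show "set_lebesgue_integral torus_measure A h = 0" .
  qed
qed



definition fser :: "(int^'n::finite \<Rightarrow> complex) \<Rightarrow> real^'n \<Rightarrow> complex" where
  "fser c x = (\<Sum>\<^sub>\<infinity>k. c k * ef k x)"

definition mixv :: "'n::finite set \<Rightarrow> real^'n \<Rightarrow> real^'n \<Rightarrow> real^'n" where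
  "mixv u x y = (\<chi> i. if i \<in> u then x$i else y$i)"

definition krest :: "'n::finite set \<Rightarrow> int^'n \<Rightarrow> int^'n" where
  "krest u k = (\<chi> i. if i \<in> u then k$i else 0)"

lemma P_op_mixv: "P_op u g x = (LINT y|torus_measure. g (mixv u x y))"
  by (simp add: P_op_def mixv_def)

lemma ef_mixv: "ef k (mixv u x y) = ef (krest u k) x * ef (krest (- u) k) y"
proof -
  have "(\<Sum>i\<in>UNIV. real_of_int (k$i) * (mixv u x y)$i)
      = (\<Sum>i\<in>UNIV. real_of_int ((krest u k)$i) * x$i + real_of_int ((krest (- u) k)$i) * y$i)"
    by (rule sum.cong) (auto simp: mixv_def krest_def)
  then show ?thesis
    unfolding ef_def by (simp add: cis_mult sum.distrib distrib_left)
qed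

lemma abs_summable_mult_ef:
  assumes c: "(\<lambda>k. norm (c k)) summable_on UNIV"
  shows "(\<lambda>k. norm (c k * ef k x)) summable_on A"
proof -
  have "(\<lambda>k. norm (c k * ef k x)) summable_on UNIV"
    using c by (simp add: norm_mult)
  then show ?thesis by (rule summable_on_subset_banach) simp
qed

lemma summable_mult_ef:
  assumes c: "(\<lambda>k. norm (c k)) summable_on UNIV"
  shows "(\<lambda>k. c k * ef k x) summable_on A"
  by (rule Infinite_Sum.abs_summable_summable[OF abs_summable_mult_ef[OF c]])

lemma infsum_single_if:
  fixes g :: "'a \<Rightarrow> complex"
  shows "(\<Sum>\<^sub>\<infinity>k. (if k = m then g k else 0)) = g m"
proof -
  have "(\<Sum>\<^sub>\<infinity>k. (if k = m then g k else 0)) = (\<Sum>\<^sub>\<infinity>k\<in>{m}. g k)"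
    by (rule infsum_cong_neutral) auto
  then show ?thesis by simp
qed

lemma fser_props:
  assumes c: "(\<lambda>k. norm (c k)) summable_on UNIV"
  shows "integrable torus_measure (fser c)" and "fourier_coeff m (fser c) = c m"
proof -
  show "integrable torus_measure (fser c)"
    unfolding fser_def
    by (rule integral_infsum(1)[OF finite_tm c]) (auto intro: meas_cont continuous_on_ef)
  have "fourier_coeff m (fser c) = (LINT x|torus_measure. fser c x * ef (- m) x)"
    by (rule fourier_coeff_ef)
  also have "\<dots> = (LINT x|torus_measure. (\<Sum>\<^sub>\<infinity>k. c k * ef (k - m) x))"
  proof (rule Bochner_Integration.integral_cong[OF refl])
    fix x
    have "fser c x * ef (- m) x = (\<Sum>\<^sub>\<infinity>k. c k * ef k x * ef (- m) x)"
      unfolding fser_def by (rule infsum_cmult_left'[symmetric])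
    also have "\<dots> = (\<Sum>\<^sub>\<infinity>k. c k * ef (k - m) x)"
      by (simp add: ef_add[symmetric] mult.assoc)
    finally show "fser c x * ef (- m) x = (\<Sum>\<^sub>\<infinity>k. c k * ef (k - m) x)" .
  qed
  also have "\<dots> = (\<Sum>\<^sub>\<infinity>k. c k * (LINT x|torus_measure. ef (k - m) x))"
    by (rule integral_infsum(2)[OF finite_tm c]) (auto intro: meas_cont continuous_on_ef)
  also have "\<dots> = (\<Sum>\<^sub>\<infinity>k. (if k = m then c k else 0))"
    by (simp add: integral_ef if_distrib cong: if_cong)
  also have "\<dots> = c m" by (rule infsum_single_if)
  finally show "fourier_coeff m (fser c) = c m" .
qed

lemma P_op_fser:
  assumes c: "(\<lambda>k. norm (c k)) summable_on UNIV"
  shows "P_op u (fser c) x = (\<Sum>\<^sub>\<infinity>k. (if (\<forall>j. j \<notin> u \<longrightarrow> k$j = 0) then c k * ef k x else 0))"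
proof -
  have meas: "(\<lambda>y. ef k (mixv u x y)) \<in> borel_measurable torus_measure" for k
    unfolding ef_mixv by (intro meas_cont continuous_intros continuous_on_ef)
  have "P_op u (fser c) x = (LINT y|torus_measure. (\<Sum>\<^sub>\<infinity>k. c k * ef k (mixv u x y)))"
    by (simp add: P_op_mixv fser_def)
  also have "\<dots> = (\<Sum>\<^sub>\<infinity>k. c k * (LINT y|torus_measure. ef k (mixv u x y)))"
    by (rule integral_infsum(2)[OF finite_tm c]) (auto intro: meas)
  also have "\<dots> = (\<Sum>\<^sub>\<infinity>k. (if (\<forall>j. j \<notin> u \<longrightarrow> k$j = 0) then c k * ef k x else 0))"
  proof (rule infsum_cong)
    fix k
    have "(LINT y|torus_measure. ef k (mixv u x y)) = ef (krest u k) x * (if krest (- u) k = 0 then 1 else 0)"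
      unfolding ef_mixv by (simp add: integral_ef)
    moreover have "krest (- u) k = 0 \<longleftrightarrow> (\<forall>j. j \<notin> u \<longrightarrow> k$j = 0)"
      by (auto simp: krest_def vec_eq_iff)
    moreover have "(\<forall>j. j \<notin> u \<longrightarrow> k$j = 0) \<Longrightarrow> krest u k = k"
      by (auto simp: krest_def vec_eq_iff)
    ultimately show "c k * (LINT y|torus_measure. ef k (mixv u x y)) = (if (\<forall>j. j \<notin> u \<longrightarrow> k$j = 0) then c k * ef k x else 0)"
      by auto
  qed
  finally show ?thesis .
qed

lemma freq_F_alt: "freq_F u = {k. {j. k$j \<noteq> 0} = u}"
  by (auto simp: freq_F_def)

declare anova.simps[simp del]

lemma anova_eq: "anova g u x = P_op u g x - (\<Sum>v\<in>{v. v \<subset> u}. anova g v x)"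
  by (rule fun_cong[OF anova.simps])

lemma anova_fser:
  assumes c: "(\<lambda>k. norm (c k)) summable_on UNIV"
  shows "anova (fser c) u x = (\<Sum>\<^sub>\<infinity>k\<in>freq_F u. c k * ef k x)"
proof -
  have "finite u" by simp
  then show ?thesis
proof (induction u rule: finite_psubset_induct)
  case (psubset u)
  let ?a = "\<lambda>k. c k * ef k x"
  have sm: "?a summable_on A" for A by (rule summable_mult_ef[OF c])
  have "P_op u (fser c) x = (\<Sum>\<^sub>\<infinity>k\<in>{k. \<forall>j. j \<notin> u \<longrightarrow> k$j = 0}. ?a k)"
    unfolding P_op_fser[OF c] by (rule infsum_cong_neutral) auto
  also have "{k. \<forall>j. j \<notin> u \<longrightarrow> k$j = 0} = (\<Union>v\<in>Pow u. freq_F v)"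
    by (auto simp: freq_F_def)
  also have "(\<Sum>\<^sub>\<infinity>k\<in>(\<Union>v\<in>Pow u. freq_F v). ?a k) = (\<Sum>v\<in>Pow u. \<Sum>\<^sub>\<infinity>k\<in>freq_F v. ?a k)"
    by (rule sum_infsum[symmetric]) (auto simp: sm freq_F_alt)
  also have "Pow u = insert u {v. v \<subset> u}" by auto
  also have "(\<Sum>v\<in>insert u {v. v \<subset> u}. \<Sum>\<^sub>\<infinity>k\<in>freq_F v. ?a k)
      = (\<Sum>\<^sub>\<infinity>k\<in>freq_F u. ?a k) + (\<Sum>v\<in>{v. v \<subset> u}. \<Sum>\<^sub>\<infinity>k\<in>freq_F v. ?a k)"
    by (subst sum.insert) auto
  also have "(\<Sum>v\<in>{v. v \<subset> u}. \<Sum>\<^sub>\<infinity>k\<in>freq_F v. ?a k) = (\<Sum>v\<in>{v. v \<subset> u}. anova (fser c) v x)"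
    using psubset.IH by (intro sum.cong) auto
  finally show ?case by (subst anova_eq) simp
qed
qed



lemma box_Pair_eq': "box (a, c) (b, d) = box a b \<times> box c d"
  by (force simp: box_def Basis_prod_def)

lemma emeasure_box_vec:
  "emeasure lborel (box a b :: (real^'n::finite) set) = ennreal (\<Prod>i\<in>UNIV. max 0 (b$i - a$i))"
proof (cases "\<forall>i. a$i \<le> b$i")
  case True
  then have "emeasure lborel (box a b) = ennreal (\<Prod>bb\<in>Basis. (b - a) \<bullet> bb)"
    by (subst emeasure_lborel_box_eq) (auto simp: Basis_vec_def inner_axis)
  also have "(\<Prod>bb\<in>Basis. (b - a) \<bullet> bb) = (\<Prod>i\<in>UNIV. max 0 (b$i - a$i))"
    using True by (simp add: prod_Basis_vec inner_axis)
  finally show ?thesis .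
next
  case False
  then obtain i where i: "b$i < a$i" by (auto simp: not_le)
  then have "box a b = {}" by (auto simp: mem_box_cart) (meson less_trans not_less_iff_gr_or_eq)
  moreover have "(\<Prod>i\<in>UNIV. max 0 (b$i - a$i)) = 0"
  proof (rule prod_zero)
    have "max 0 (b$i - a$i) = 0" using i by simp
    then show "\<exists>j\<in>UNIV. max 0 (b$j - a$j) = 0" by blast
  qed simp
  ultimately show ?thesis by (metis emeasure_empty ennreal_0)
qed

lemma emeasure_box_pair:
  fixes a b c d :: "real^'n::finite"
  shows "emeasure lborel (box (a, c) (b, d)) = ennreal ((\<Prod>i\<in>UNIV. max 0 (b$i - a$i)) * (\<Prod>i\<in>UNIV. max 0 (d$i - c$i)))"
proof -
  have "emeasure lborel (box (a, c) (b, d)) = emeasure (lborel \<Otimes>\<^sub>M lborel) (box a b \<times> box c d)"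
    by (simp add: box_Pair_eq' lborel_prod)
  also have "\<dots> = emeasure lborel (box a b) * emeasure lborel (box c d)"
    by (intro lborel.emeasure_pair_measure_Times) auto
  also have "\<dots> = ennreal ((\<Prod>i\<in>UNIV. max 0 (b$i - a$i)) * (\<Prod>i\<in>UNIV. max 0 (d$i - c$i)))"
    by (simp add: emeasure_box_vec ennreal_mult prod_nonneg)
  finally show ?thesis .
qed

definition Psi :: "'n::finite set \<Rightarrow> (real^'n) \<times> (real^'n) \<Rightarrow> (real^'n) \<times> (real^'n)" where
  "Psi u p = (mixv u (fst p) (snd p), mixv u (snd p) (fst p))"

lemma continuous_mixv: "continuous_on UNIV (\<lambda>p. mixv u (f p) (g p))" if "continuous_on UNIV f" "continuous_on UNIV g"
  for f g :: "'a::topological_space \<Rightarrow> real^'n::finite"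
  unfolding mixv_def
proof (intro continuous_on_vec_lambda)
  fix i show "continuous_on UNIV (\<lambda>p. if i \<in> u then f p $ i else g p $ i)"
    by (cases "i \<in> u") (auto intro!: continuous_intros that)
qed

lemma Psi_measurable: "Psi u \<in> borel_measurable borel"
  unfolding Psi_def
  by (intro borel_measurable_continuous_onI continuous_on_Pair continuous_mixv continuous_intros)

lemma Psi_box: "Psi u -` box (a, c) (b, d) = box (mixv u a c, mixv u c a) (mixv u b d, mixv u d b)"
  by (auto simp: box_Pair_eq' Psi_def mem_box_cart mixv_def split: if_splits)

lemma lborel_Psi: "lborel = distr lborel borel (Psi u :: (real^'n::finite) \<times> (real^'n) \<Rightarrow> _)"
proof (rule lborel_eqI)
  fix l w :: "(real^'n) \<times> (real^'n)"
  assume le: "\<And>b. b \<in> Basis \<Longrightarrow> l \<bullet> b \<le> w \<bullet> b"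
  obtain a c where l: "l = (a, c)" by (cases l)
  obtain b d where w: "w = (b, d)" by (cases w)
  have "emeasure (distr lborel borel (Psi u)) (box l w) = emeasure lborel (Psi u -` box l w)"
    by (subst emeasure_distr) (auto simp: Psi_measurable)
  also have "\<dots> = emeasure lborel (box l w)"
  proof -
    have "(\<Prod>i\<in>UNIV. max 0 ((mixv u b d)$i - (mixv u a c)$i)) * (\<Prod>i\<in>UNIV. max 0 ((mixv u d b)$i - (mixv u c a)$i))
        = (\<Prod>i\<in>UNIV. max 0 (b$i - a$i)) * (\<Prod>i\<in>UNIV. max 0 (d$i - c$i))"
      unfolding prod.distrib[symmetric] by (intro prod.cong refl) (auto simp: mixv_def)
    then show ?thesis unfolding l w Psi_box emeasure_box_pair by simp
  qed
  also have "\<dots> = (\<Prod>b\<in>Basis. (w - l) \<bullet> b)"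
    using le by (intro emeasure_lborel_box) auto
  finally show "emeasure (distr lborel borel (Psi u)) (box l w) = (\<Prod>b\<in>Basis. (w - l) \<bullet> b)" .
qed simp

lemma mix_AE:
  fixes Q :: "real^'n::finite \<Rightarrow> bool"
  assumes "AE z in lborel. Q z"
  shows "AE x in lborel. AE y in lborel. Q (mixv u x y)"
proof -
  from assms obtain N where N: "{z \<in> space lborel. \<not> Q z} \<subseteq> N" "emeasure lborel N = 0" "N \<in> sets lborel"
    by (rule AE_E)
  have NB[measurable]: "N \<in> sets borel" using N(3) by simp
  have "emeasure (lborel :: ((real^'n) \<times> (real^'n)) measure) (N \<times> UNIV) = emeasure (lborel \<Otimes>\<^sub>M lborel) (N \<times> (UNIV :: (real^'n) set))"
    by (simp add: lborel_prod)
  also have "\<dots> = emeasure lborel N * emeasure lborel (UNIV :: (real^'n) set)"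
    by (intro lborel.emeasure_pair_measure_Times) (auto simp: N(3))
  also have "\<dots> = 0" by (simp add: N(2))
  moreover have NU: "N \<times> (UNIV :: (real^'n) set) \<in> sets (lborel :: ((real^'n) \<times> (real^'n)) measure)"
  proof -
    have "N \<times> (UNIV :: (real^'n) set) \<in> sets (lborel \<Otimes>\<^sub>M lborel)"
      using N(3) by (intro pair_measureI) auto
    then show ?thesis by (simp only: lborel_prod)
  qed
  ultimately have "N \<times> UNIV \<in> null_sets (lborel :: ((real^'n) \<times> (real^'n)) measure)"
    by (auto simp: null_sets_def)
  then have "AE p in (lborel :: ((real^'n) \<times> (real^'n)) measure). p \<notin> N \<times> UNIV"
    by (rule AE_not_in)
  then have "AE p in distr lborel borel (Psi u). fst p \<notin> N"
    by (subst lborel_Psi[symmetric]) (auto elim: eventually_mono)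
  moreover have "{p. fst p \<notin> N} \<in> sets (borel :: ((real^'n) \<times> (real^'n)) measure)"
  proof -
    have "{p. fst p \<notin> N} = UNIV - (N \<times> (UNIV :: (real^'n) set))" by auto
    then show ?thesis using NU by simp
  qed
  ultimately have "AE p in lborel. fst (Psi u p) \<notin> N"
    by (subst (asm) AE_distr_iff) (auto simp: Psi_measurable)
  then have "AE p in (lborel :: (real^'n) measure) \<Otimes>\<^sub>M (lborel :: (real^'n) measure). fst (Psi u p) \<notin> N"
    by (simp only: lborel_prod)
  then have "AE x in lborel. AE y in lborel. fst (Psi u (x, y)) \<notin> N"
    by (rule lborel_pair.AE_pair)
  then show ?thesis
    using N(1) by (auto simp: Psi_def elim!: eventually_mono)
qed



lemma AE_tm_lborel:
  assumes "AE x in torus_measure. P x"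
  shows "AE x in lborel. x \<in> torus \<longrightarrow> P x"
proof -
  have "AE x in lebesgue. x \<in> torus \<longrightarrow> P x"
    using assms unfolding torus_measure_def by (subst (asm) AE_restrict_space_iff) (auto simp: torus_lebesgue)
  then show ?thesis by (simp add: AE_completion_iff)
qed

lemma meas_AE_tm:
  fixes g h :: "real^'n::finite \<Rightarrow> complex"
  assumes g: "g \<in> borel_measurable torus_measure" and ae: "AE x in torus_measure. g x = h x"
  shows "h \<in> borel_measurable torus_measure"
proof -
  have "(\<lambda>x. if x \<in> torus then g x else 0) \<in> borel_measurable lebesgue"
    using g unfolding torus_measure_def by (rule borel_measurable_if_I) (rule torus_lebesgue)
  moreover have "AE x in lebesgue. (if x \<in> torus then g x else 0) = (if x \<in> torus then h x else 0)"
    using ae unfolding torus_measure_def by (subst (asm) AE_restrict_space_iff) (auto simp: torus_lebesgue elim: eventually_mono)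
  ultimately have "(\<lambda>x. if x \<in> torus then h x else 0) \<in> borel_measurable lebesgue"
    by (rule borel_measurable_AE)
  then show ?thesis unfolding torus_measure_def by (rule borel_measurable_if_D)
qed

lemma mixv_torus: "x \<in> torus \<Longrightarrow> y \<in> torus \<Longrightarrow> mixv u x y \<in> torus"
  by (auto simp: torus_def mixv_def)

lemma fourier_coeff_diff:
  assumes f: "integrable torus_measure f" and g: "integrable torus_measure g"
  shows "fourier_coeff k (\<lambda>x. f x - g x) = fourier_coeff k f - fourier_coeff k g"
proof -
  have [measurable]: "ef (- k) \<in> borel_measurable torus_measure" by (rule meas_cont[OF continuous_on_ef])
  have i: "integrable torus_measure (\<lambda>x. h x * ef (- k) x)" if h: "integrable torus_measure h" for h
  proof -
    have [measurable]: "h \<in> borel_measurable torus_measure" using h by auto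
    show ?thesis by (rule Bochner_Integration.integrable_bound[OF h]) (auto simp: norm_mult)
  qed
  show ?thesis unfolding fourier_coeff_ef
    using Bochner_Integration.integral_diff[OF i[OF f] i[OF g]] by (simp add: left_diff_distrib)
qed

lemma P_op_AE:
  fixes f g :: "real^'n::finite \<Rightarrow> complex"
  assumes ae: "AE x in torus_measure. f x = g x"
    and gm: "\<And>x. (\<lambda>y. g (mixv u x y)) \<in> borel_measurable torus_measure"
  shows "AE x in torus_measure. P_op u f x = P_op u g x"
proof -
  have "AE z in lborel. z \<in> torus \<longrightarrow> f z = g z" by (rule AE_tm_lborel[OF ae])
  then have "AE x in lborel. AE y in lborel. mixv u x y \<in> torus \<longrightarrow> f (mixv u x y) = g (mixv u x y)"
    by (rule mix_AE)
  then have "AE x in lborel. AE y in torus_measure. mixv u x y \<in> torus \<longrightarrow> f (mixv u x y) = g (mixv u x y)"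
    by (auto elim!: eventually_mono intro: AE_lborel_tm)
  then have "AE x in torus_measure. AE y in torus_measure. mixv u x y \<in> torus \<longrightarrow> f (mixv u x y) = g (mixv u x y)"
    by (rule AE_lborel_tm)
  then have "AE x in torus_measure. x \<in> torus \<and> (AE y in torus_measure. mixv u x y \<in> torus \<longrightarrow> f (mixv u x y) = g (mixv u x y))"
    using AE_space[of "torus_measure :: (real^'n) measure"] by eventually_elim auto
  then show ?thesis
  proof (rule eventually_mono)
    fix x assume "x \<in> torus \<and> (AE y in torus_measure. mixv u x y \<in> torus \<longrightarrow> f (mixv u x y) = g (mixv u x y))"
    then have xT: "x \<in> torus" and A: "AE y in torus_measure. mixv u x y \<in> torus \<longrightarrow> f (mixv u x y) = g (mixv u x y)" by auto
    have A2: "AE y in torus_measure. g (mixv u x y) = f (mixv u x y)"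
      using A AE_space[of "torus_measure :: (real^'n) measure"]
      by eventually_elim (use mixv_torus xT in auto)
    have fm: "(\<lambda>y. f (mixv u x y)) \<in> borel_measurable torus_measure"
      by (rule meas_AE_tm[OF gm A2])
    show "P_op u f x = P_op u g x"
      unfolding P_op_mixv using A2 by (intro integral_cong_AE fm gm) (auto elim: eventually_mono)
  qed
qed



lemma fser_slice_meas:
  assumes c: "(\<lambda>k. norm (c k)) summable_on UNIV"
  shows "(\<lambda>y. fser c (mixv u x y)) \<in> borel_measurable torus_measure"
proof -
  have meas: "(\<lambda>y. ef k (mixv u x y)) \<in> borel_measurable torus_measure" for k
    unfolding ef_mixv by (intro meas_cont continuous_intros continuous_on_ef)
  have "integrable torus_measure (\<lambda>y. \<Sum>\<^sub>\<infinity>k. c k * ef k (mixv u x y))"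
    by (rule integral_infsum(1)[OF finite_tm c]) (auto intro: meas)
  then show ?thesis unfolding fser_def by auto
qed

lemma main_AE:
  fixes f :: "real^'n::finite \<Rightarrow> complex" and c :: "int^'n \<Rightarrow> complex"
  assumes fi: "integrable torus_measure f" and c: "(\<lambda>k. norm (c k)) summable_on UNIV"
    and cf: "\<And>k. fourier_coeff k f = c k"
  shows "AE x in torus_measure. f x = fser c x \<and> (\<forall>u. anova f u x = (\<Sum>\<^sub>\<infinity>k\<in>freq_F u. c k * ef k x))"
proof -
  note S = fser_props[OF c]
  have "AE x in torus_measure. f x - fser c x = 0"
  proof (rule fourier_uniqueness)
    show "integrable torus_measure (\<lambda>x. f x - fser c x)" using fi S(1) by auto
    show "fourier_coeff k (\<lambda>x. f x - fser c x) = 0" for k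
      using fourier_coeff_diff[OF fi S(1)] cf S(2) by simp
  qed
  then have AEf: "AE x in torus_measure. f x = fser c x" by (auto elim: eventually_mono)
  have AEP: "AE x in torus_measure. \<forall>v\<in>UNIV. P_op v f x = P_op v (fser c) x"
    by (intro AE_finite_allI P_op_AE[OF AEf] fser_slice_meas[OF c]) auto
  from AEf AEP show ?thesis
  proof eventually_elim
    case (elim x)
    have "anova f u x = anova (fser c) u x" for u
    proof -
      have "finite u" by simp
      then show ?thesis
      proof (induction u rule: finite_psubset_induct)
        case (psubset u)
        have "anova f u x = P_op u f x - (\<Sum>v\<in>{v. v \<subset> u}. anova f v x)" by (rule anova_eq)
        also have "\<dots> = P_op u (fser c) x - (\<Sum>v\<in>{v. v \<subset> u}. anova (fser c) v x)"
          using elim(2) psubset.IH by simp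
        also have "\<dots> = anova (fser c) u x" by (rule anova_eq[symmetric])
        finally show ?case .
      qed
    qed
    then show ?case using elim(1) anova_fser[OF c] by simp
  qed
qed



lemma final_arith:
  fixes LU Ld B C A e1 e2 N :: real
  assumes LU: "LU \<le> Ld + B" and Ld: "Ld / A < e2" and B0: "0 \<le> B" and BC: "B \<le> C" and CA: "C \<le> A"
    and BN: "B \<le> N * e1 * C" and e1: "0 < e1" and e2: "0 < e2" and N: "0 \<le> N" and C0: "0 \<le> C"
  shows "LU / A \<le> e2 + sqrt (N * e1)"
proof (cases "A = 0")
  case True
  then show ?thesis using e2 e1 N by simp
next
  case False
  then have A: "A > 0" using C0 CA by simp
  have "LU / A \<le> (Ld + B) / A" using LU A by (simp add: divide_right_mono)
  also have "\<dots> = Ld / A + B / A" by (simp add: add_divide_distrib)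
  finally have 1: "LU / A \<le> Ld / A + B / A" .
  have B1: "B / A \<le> 1" using BC CA A by simp
  have "B \<le> N * e1 * A"
    using BN CA N e1 by (meson mult_left_mono order_trans mult_nonneg_nonneg less_imp_le)
  then have B2: "B / A \<le> N * e1" using A by (simp add: divide_le_eq)
  have B3: "B / A \<le> sqrt (N * e1)"
  proof (cases "N * e1 \<ge> 1")
    case True
    then have "1 \<le> sqrt (N * e1)" by simp
    then show ?thesis using B1 by linarith
  next
    case False
    have t0: "0 \<le> N * e1" using N e1 by simp
    have s1: "sqrt (N * e1) \<le> 1" using False t0 by simp
    have "N * e1 = sqrt (N * e1) * sqrt (N * e1)" using t0 by simp
    also have "\<dots> \<le> sqrt (N * e1) * 1" using s1 t0 by (intro mult_left_mono) auto
    finally show ?thesis using B2 by simp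
  qed
  show ?thesis using 1 Ld B3 by linarith
qed

lemma Linf_le:
  fixes DU Dd :: "real^'n::finite \<Rightarrow> complex"
  assumes mU: "DU \<in> borel_measurable torus_measure" and md: "Dd \<in> borel_measurable torus_measure"
    and bd: "AE x in torus_measure. norm (Dd x) \<le> K"
    and le: "AE x in torus_measure. norm (DU x) \<le> norm (Dd x) + B" and B: "0 \<le> B"
  shows "Linf_norm DU \<le> Linf_norm Dd + B"
proof -
  let ?M = "torus_measure :: (real^'n) measure"
  let ?e = "\<lambda>g. esssup ?M (\<lambda>x. ereal (cmod (g x)))"
  have [measurable]: "DU \<in> borel_measurable ?M" "Dd \<in> borel_measurable ?M" by (fact mU, fact md)
  have sp: "emeasure ?M (space ?M) \<noteq> 0" by (simp add: emeasure_tm)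
  have nn: "0 \<le> ?e g" if [measurable]: "g \<in> borel_measurable ?M" for g
  proof -
    have "esssup ?M (\<lambda>x. 0::ereal) \<le> ?e g" by (rule esssup_mono) auto
    then show ?thesis using esssup_const[OF sp, of "0::ereal"] by simp
  qed
  define L where "L = ?e Dd"
  have L0: "0 \<le> L" unfolding L_def by (rule nn) simp
  have LK: "L \<le> ereal K" unfolding L_def
    by (rule esssup_I) (use bd in \<open>auto elim: eventually_mono\<close>)
  have "AE x in ?M. ereal (cmod (Dd x)) \<le> L" unfolding L_def by (rule esssup_AE)
  with le have "AE x in ?M. ereal (cmod (DU x)) \<le> L + ereal B"
  proof eventually_elim
    case (elim x)
    have "ereal (cmod (DU x)) \<le> ereal (cmod (Dd x) + B)" using elim(1) by simp
    also have "\<dots> = ereal (cmod (Dd x)) + ereal B" by simp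
    also have "\<dots> \<le> L + ereal B" using elim(2) by (rule add_right_mono)
    finally show ?case .
  qed
  then have EU: "?e DU \<le> L + ereal B" by (intro esssup_I) auto
  obtain l where l: "L = ereal l" using L0 LK by (cases L) auto
  have "real_of_ereal (?e DU) \<le> real_of_ereal (L + ereal B)"
    by (rule real_of_ereal_positive_mono[OF nn[OF mU] EU]) (simp add: l)
  also have "\<dots> = real_of_ereal L + B" by (simp add: l)
  finally show ?thesis unfolding Linf_norm_def L_def .
qed

lemma norm_infsum_ef_le:
  assumes c: "(\<lambda>k. norm (c k)) summable_on UNIV"
  shows "norm (\<Sum>\<^sub>\<infinity>k\<in>A. c k * ef k x) \<le> (\<Sum>\<^sub>\<infinity>k\<in>A. norm (c k))"
proof -
  have "norm (\<Sum>\<^sub>\<infinity>k\<in>A. c k * ef k x) \<le> (\<Sum>\<^sub>\<infinity>k\<in>A. norm (c k * ef k x))"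
    by (rule norm_infsum_bound[OF abs_summable_mult_ef[OF c]])
  then show ?thesis by (simp add: norm_mult)
qed

lemma infsum_norm_mono:
  assumes c: "(\<lambda>k. norm (c k)) summable_on UNIV" and AB: "A \<subseteq> B"
  shows "(\<Sum>\<^sub>\<infinity>k\<in>A. norm (c k)) \<le> (\<Sum>\<^sub>\<infinity>k\<in>B. norm (c k))"
  by (rule infsum_mono_neutral) (use AB summable_on_subset_banach[OF c] in auto)

lemma fser_restrict:
  "fser (\<lambda>k. if k \<in> A then c k else 0) x = (\<Sum>\<^sub>\<infinity>k\<in>A. c k * ef k x)"
  unfolding fser_def by (rule infsum_cong_neutral) auto

lemma summable_restrict:
  assumes c: "(\<lambda>k. norm (c k)) summable_on UNIV"
  shows "(\<lambda>k. norm (if k \<in> A then c k else 0)) summable_on UNIV"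
  by (rule Infinite_Sum.abs_summable_on_comparison_test'[OF c]) auto



theorem theorem6p2:
  fixes w :: "int^'n::finite \<Rightarrow> real"
    and f :: "real^'n \<Rightarrow> complex"
    and ds :: nat and U :: "'n set set" and \<epsilon>1 \<epsilon>2 :: real
  assumes ds: "1 \<le> ds" "ds \<le> CARD('n)"
    and w: "\<And>k. 1 \<le> w k"
    and f: "in_A w f"
    and U: "anova_subset U" "U \<subseteq> U_ds ds"
    and e1: "\<epsilon>1 > 0"
    and h1: "\<And>u. u \<in> U_ds ds - U \<Longrightarrow>
       (\<Sum>\<^sub>\<infinity>k\<in>freq_F u. cmod (fourier_coeff k f)) / (\<Sum>\<^sub>\<infinity>k. cmod (fourier_coeff k f)) < \<epsilon>1"
    and e2: "\<epsilon>2 > 0"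
    and h2: "Linf_norm (\<lambda>x. f x - anova_trunc (U_ds ds) f x) / A_norm w f < \<epsilon>2"
  shows "Linf_norm (\<lambda>x. f x - anova_trunc U f x) / A_norm w f
           \<le> \<epsilon>2 + sqrt (real (card (U_ds ds - U)) * \<epsilon>1)"
proof -
  define c where "c k = fourier_coeff k f" for k
  have fi: "integrable torus_measure f" and ws: "(\<lambda>k. w k * cmod (c k)) summable_on UNIV"
    using f by (auto simp: in_A_def c_def)
  have nw: "norm (c k) \<le> w k * cmod (c k)" for k
    using w[of k] by (simp add: mult_le_cancel_right1)
  have c: "(\<lambda>k. norm (c k)) summable_on UNIV"
    using Infinite_Sum.abs_summable_on_comparison_test'[OF ws, of "\<lambda>k. norm (c k)"] nw by simp
  have AE: "AE x in torus_measure. f x = fser c x \<and> (\<forall>u. anova f u x = (\<Sum>\<^sub>\<infinity>k\<in>freq_F u. c k * ef k x))"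
    by (rule main_AE[OF fi c]) (simp add: c_def)
  have finU: "finite (U_ds ds :: 'n set set)" by (rule finite_subset[of _ UNIV]) auto
  define V where "V = U_ds ds - U"
  define C where "C = (\<Sum>\<^sub>\<infinity>k. norm (c k))"
  define Cu where "Cu u = (\<Sum>\<^sub>\<infinity>k\<in>freq_F u. norm (c k))" for u
  define B where "B = (\<Sum>u\<in>V. Cu u)"
  define D where "D T x = f x - anova_trunc T f x" for T x
  have C0: "0 \<le> C" unfolding C_def by (rule infsum_nonneg) simp
  have Cu0: "0 \<le> Cu u" for u unfolding Cu_def by (rule infsum_nonneg) simp
  have CuC: "Cu u \<le> C" for u unfolding Cu_def C_def by (rule infsum_norm_mono[OF c]) simp
  have B0: "0 \<le> B" unfolding B_def using Cu0 by (simp add: sum_nonneg)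
  have Dmeas: "D T \<in> borel_measurable torus_measure" if T: "finite T" for T
  proof (rule meas_AE_tm)
    let ?G = "\<lambda>x. fser c x - (\<Sum>u\<in>T. fser (\<lambda>k. if k \<in> freq_F u then c k else 0) x)"
    have m1: "fser c \<in> borel_measurable torus_measure" using fser_props(1)[OF c] by auto
    have m2: "fser (\<lambda>k. if k \<in> freq_F u then c k else 0) \<in> borel_measurable torus_measure" for u
      using fser_props(1)[OF summable_restrict[OF c]] by auto
    show "?G \<in> borel_measurable torus_measure"
      using m1 m2 by (intro borel_measurable_diff borel_measurable_sum) auto
    show "AE x in torus_measure. ?G x = D T x"
      using AE by eventually_elim (simp add: D_def anova_trunc_def fser_restrict)
  qed
  have bd: "AE x in torus_measure. norm (D (U_ds ds) x) \<le> C + real (card (U_ds ds :: 'n set set)) * C"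
    using AE
  proof eventually_elim
    case (elim x)
    have "norm (D (U_ds ds) x) = norm (fser c x - (\<Sum>u\<in>U_ds ds. \<Sum>\<^sub>\<infinity>k\<in>freq_F u. c k * ef k x))"
      using elim by (simp add: D_def anova_trunc_def)
    also have "\<dots> \<le> norm (fser c x) + norm (\<Sum>u\<in>U_ds ds. \<Sum>\<^sub>\<infinity>k\<in>freq_F u. c k * ef k x)"
      by (rule norm_triangle_ineq4)
    also have "\<dots> \<le> C + (\<Sum>u\<in>(U_ds ds :: 'n set set). C)"
    proof (rule add_mono)
      show "norm (fser c x) \<le> C"
        unfolding fser_def C_def by (rule norm_infsum_ef_le[OF c])
      have "norm (\<Sum>u\<in>U_ds ds. \<Sum>\<^sub>\<infinity>k\<in>freq_F u. c k * ef k x) \<le> (\<Sum>u\<in>U_ds ds. norm (\<Sum>\<^sub>\<infinity>k\<in>freq_F u. c k * ef k x))"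
        by (rule norm_sum)
      also have "\<dots> \<le> (\<Sum>u\<in>(U_ds ds :: 'n set set). C)"
      proof (rule sum_mono)
        fix u show "norm (\<Sum>\<^sub>\<infinity>k\<in>freq_F u. c k * ef k x) \<le> C"
          using order_trans[OF norm_infsum_ef_le[OF c] CuC[unfolded Cu_def]] by blast
      qed
      finally show "norm (\<Sum>u\<in>U_ds ds. \<Sum>\<^sub>\<infinity>k\<in>freq_F u. c k * ef k x) \<le> (\<Sum>u\<in>(U_ds ds :: 'n set set). C)" .
    qed
    finally show ?case by simp
  qed
  have le: "AE x in torus_measure. norm (D U x) \<le> norm (D (U_ds ds) x) + B"
    using AE
  proof eventually_elim
    case (elim x)
    have split: "anova_trunc (U_ds ds) f x = anova_trunc U f x + (\<Sum>u\<in>V. anova f u x)"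
      unfolding anova_trunc_def V_def using sum.subset_diff[OF U(2) finU] by (simp add: add.commute)
    have "D U x = D (U_ds ds) x + (\<Sum>u\<in>V. anova f u x)"
      unfolding D_def split by simp
    then have "norm (D U x) \<le> norm (D (U_ds ds) x) + norm (\<Sum>u\<in>V. anova f u x)"
      by (simp add: norm_triangle_ineq)
    also have "norm (\<Sum>u\<in>V. anova f u x) \<le> (\<Sum>u\<in>V. norm (anova f u x))" by (rule norm_sum)
    also have "\<dots> \<le> B" unfolding B_def Cu_def
      using elim by (intro sum_mono) (simp add: norm_infsum_ef_le[OF c])
    finally show ?case by simp
  qed
  have finV: "finite U" using finite_subset[OF U(2) finU] .
  have LU: "Linf_norm (D U) \<le> Linf_norm (D (U_ds ds)) + B"
    by (rule Linf_le[OF Dmeas[OF finV] Dmeas[OF finU] bd le B0])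
  have CA: "C \<le> A_norm w f"
    unfolding C_def A_norm_def c_def[symmetric]
    by (rule infsum_mono[OF c ws]) (rule nw)
  have BC: "B \<le> C"
  proof -
    have disj: "freq_F u \<inter> freq_F u' = {}" if "u \<noteq> u'" for u u' :: "'n set"
      using that by (auto simp: freq_F_alt)
    have "B = (\<Sum>\<^sub>\<infinity>k\<in>(\<Union>u\<in>V. freq_F u). norm (c k))"
      unfolding B_def Cu_def
      by (rule sum_infsum) (use finU disj summable_on_subset_banach[OF c] in \<open>auto simp: V_def\<close>)
    also have "\<dots> \<le> C" unfolding C_def by (rule infsum_norm_mono[OF c]) simp
    finally show ?thesis .
  qed
  have BN: "B \<le> real (card V) * \<epsilon>1 * C"
  proof -
    have "Cu u \<le> \<epsilon>1 * C" if "u \<in> V" for u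
    proof (cases "C = 0")
      case True
      then show ?thesis using Cu0[of u] CuC[of u] by simp
    next
      case False
      then have "C > 0" using C0 by simp
      moreover have "Cu u / C < \<epsilon>1" using h1[of u] that by (simp add: V_def Cu_def C_def c_def)
      ultimately show ?thesis by (simp add: divide_less_eq less_imp_le)
    qed
    then have "B \<le> (\<Sum>u\<in>V. \<epsilon>1 * C)" unfolding B_def by (rule sum_mono)
    then show ?thesis by simp
  qed
  have DU: "D U = (\<lambda>x. f x - anova_trunc U f x)" by (rule ext) (simp add: D_def)
  show ?thesis
    using final_arith[OF LU h2[folded D_def] B0 BC CA BN e1 e2] C0
    by (simp add: DU V_def)
qed

end
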